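(* Under the setting of the context, assume that all zeros of $T$ lie in $\mathbb{C}\setminus(\Delta_1\cup\Delta_m)$, that $f$ has exactly $D$ poles in $\mathbb{C}\setminus\Delta_m$, and that $n>N\ge D$. Then for each $j=1,\ldots,m-1$ and $z\in\mathbb{C}\setminus\Delta_{j+1}$, $$\frac{\mathcal{A}_{n,j}}{Q_{n,j}}(z)=\int_{\Delta_{j+1}}\frac{\mathcal{A}_{n,j+1}(x)}{z-x}\frac{d\sigma_{j+1}(x)}{Q_{n,j}(x)},$$ and for $z\in\mathbb{C}\setminus\Delta_1$, $$T(z)\mathcal{A}_{n,0}(z)=\int_{\Delta_1}\frac{\mathcal{A}_{n,1}(x)T(x)}{z-x}d\sigma_1(x).$$ Moreover, for $j=1,\ldots,m-1$, $$\int_{\Delta_{j+1}}x^\nu\mathcal{A}_{n,j+1}(x)\frac{d\sigma_{j+1}(x)}{Q_{n,j}(x)}=0,\qquad \nu=0,1,\ldots,n-D-1,$$ and $$\int_{\Delta_1}x^\nu\mathcal{A}_{n,1}(x)T(x)\,d\sigma_1(x)=0,\qquad\nu=0,1,\ldots,n-D-1.$$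
   Context: Cauchy transform: $\widehat{s}(z)=\int\frac{ds(x)}{z-x}$. For measures $\sigma_\alpha,\sigma_\beta$ on $\mathbb{R}$ with disjoint convex hulls of supports, $d\langle\sigma_\alpha,\sigma_\beta\rangle(x):=\widehat{\sigma}_\beta(x)d\sigma_\alpha(x)$. Setting: $m\ge1$; $\Delta_1,\ldots,\Delta_m$ bounded compact intervals of $\mathbb{R}$ with $\Delta_j\cap\Delta_{j+1}=\emptyset$ ($\Delta_{m+1}=\emptyset$); $\sigma_j$ a finite Borel measure of constant sign with infinite support whose convex hull is $\Delta_j$. For $1\le j\le k\le m$, $s_{j,k}=\langle\sigma_j,\langle\sigma_{j+1},\ldots,\sigma_k\rangle\rangle$, $s_{k,j}=\langle\sigma_k,\langle\sigma_{k-1},\ldots,\sigma_j\rangle\rangle$ ($s_{j,j}=\sigma_j$). $r_k=v_k/t_k$ rational with real coefficients, $t_k$ monic, $\deg v_k<\deg t_k$, $(v_k,t_k)=1$. $T=\operatorname{lcm}(t_1,\ldots,t_m)$, $D=\deg T$, $f:=\widehat{s}_{m,1}-\sum_{k=1}^{m-1}(-1)^k\widehat{s}_{m,k+1}r_k-(-1)^mr_m$. Multi-level Hermite–Padé polynomials: $a_{n,0},\ldots,a_{n,m}$, not all zero, $\deg a_{n,j}\le n-1$ ($j<m$), $\deg a_{n,m}\le n$, with, as $z\to\infty$, $\mathcal{A}_{n,0}:=a_{n,0}+\sum_{k=1}^m(-1)^ka_{n,k}(\widehat{s}_{1,k}+r_k)=O(z^{-n-1})$, $\mathcal{A}_{n,j}:=(-1)^ja_{n,j}+\sum_{k=j+1}^m(-1)^ka_{n,k}\widehat{s}_{j+1,k}=O(z^{-1})$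 ($1\le j\le m-1$); $\mathcal{A}_{n,m}:=(-1)^ma_{n,m}$. Under the stated assumptions on $T$ and $f$ it is known that there is $N\ge D$ such that for $n>N$: $\deg a_{n,m}=n$, the solution is unique up to a constant factor and normalized with $a_{n,m}$ monic; $a_{n,m}$ has exactly $n-D$ simple zeros on $\Delta_m$; for $1\le j\le m-1$, $\mathcal{A}_{n,j}$ has exactly $n-D$ zeros in $\mathbb{C}\setminus\Delta_{j+1}$, simple and in $\Delta_j$. $Q_{n,j}$ ($1\le j\le m$) is the monic polynomial of degree $n-D$ whose zeros are the zeros of $\mathcal{A}_{n,j}$ on $\Delta_j$. *)

theory Defs
  imports "HOL-Complex_Analysis.Complex_Analysis" "HOL-Library.Landau_Symbols"
          "HOL-Computational_Algebra.Polynomial_Factorial" "HOL-Computational_Algebra.Field_as_Ring"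
begin

text \<open>A signed measure of constant sign is represented as sign (ep j) times a finite
  positive Borel measure (mu j).  Integrals w.r.t. sigma_j are ep j times integrals w.r.t. mu j.\<close>

definition msupp :: "real measure \<Rightarrow> real set" where
  "msupp M = {x. \<forall>e>0. emeasure M (ball x e) > 0}"

text \<open>nik_up mu ep j d z = Cauchy transform of s_{j,j+d} = <sigma_j,...,sigma_{j+d}> at z.\<close>
primrec nik_up :: "(nat \<Rightarrow> real measure) \<Rightarrow> (nat \<Rightarrow> real) \<Rightarrow> nat \<Rightarrow> nat \<Rightarrow> complex \<Rightarrow> complex" where
  "nik_up mu ep j 0 z = of_real (ep j) * (LINT x|mu j. 1 / (z - of_real x))"
| "nik_up mu ep j (Suc d) z =
     of_real (ep j) * (LINT x|mu j. nik_up mu ep (Suc j) d (of_real x) / (z - of_real x))"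

text \<open>nik_down mu ep k d z = Cauchy transform of s_{k,k-d} = <sigma_k,sigma_{k-1},...,sigma_{k-d}> at z.\<close>
primrec nik_down :: "(nat \<Rightarrow> real measure) \<Rightarrow> (nat \<Rightarrow> real) \<Rightarrow> nat \<Rightarrow> nat \<Rightarrow> complex \<Rightarrow> complex" where
  "nik_down mu ep k 0 z = of_real (ep k) * (LINT x|mu k. 1 / (z - of_real x))"
| "nik_down mu ep k (Suc d) z =
     of_real (ep k) * (LINT x|mu k. nik_down mu ep (k - 1) d (of_real x) / (z - of_real x))"

definition hat_s :: "(nat \<Rightarrow> real measure) \<Rightarrow> (nat \<Rightarrow> real) \<Rightarrow> nat \<Rightarrow> nat \<Rightarrow> complex \<Rightarrow> complex" where
  "hat_s mu ep j k z = (if j \<le> k then nik_up mu ep j (k - j) z else nik_down mu ep j (j - k) z)"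

definition ratf :: "(nat \<Rightarrow> real poly) \<Rightarrow> (nat \<Rightarrow> real poly) \<Rightarrow> nat \<Rightarrow> complex \<Rightarrow> complex" where
  "ratf v t k z = poly (map_poly of_real (v k)) z / poly (map_poly of_real (t k)) z"

definition TT :: "(nat \<Rightarrow> real poly) \<Rightarrow> nat \<Rightarrow> real poly" where
  "TT t m = Lcm (t ` {1..m})"

definition fF :: "(nat \<Rightarrow> real measure) \<Rightarrow> (nat \<Rightarrow> real) \<Rightarrow> (nat \<Rightarrow> real poly) \<Rightarrow> (nat \<Rightarrow> real poly)
    \<Rightarrow> nat \<Rightarrow> complex \<Rightarrow> complex" where
  "fF mu ep v t m z = hat_s mu ep m 1 z
     - (\<Sum>k=1..m-1. (-1)^k * hat_s mu ep m (k+1) z * ratf v t k z)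
     - (-1)^m * ratf v t m z"

definition Acal :: "(nat \<Rightarrow> real measure) \<Rightarrow> (nat \<Rightarrow> real) \<Rightarrow> (nat \<Rightarrow> real poly) \<Rightarrow> (nat \<Rightarrow> real poly)
    \<Rightarrow> nat \<Rightarrow> (nat \<Rightarrow> complex poly) \<Rightarrow> nat \<Rightarrow> complex \<Rightarrow> complex" where
  "Acal mu ep v t m a j z =
     (if j = 0 then
        poly (a 0) z + (\<Sum>k=1..m. (-1)^k * poly (a k) z * (hat_s mu ep 1 k z + ratf v t k z))
      else
        (-1)^j * poly (a j) z + (\<Sum>k=j+1..m. (-1)^k * poly (a k) z * hat_s mu ep (j+1) k z))"

text \<open>The function T(z) A_{n,0}(z), written with T r_k = (T div t_k) v_k so that it is the
  (entire-in-the-rational-part) function meant in the paper, also at the zeros of T.\<close>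
definition TA0 :: "(nat \<Rightarrow> real measure) \<Rightarrow> (nat \<Rightarrow> real) \<Rightarrow> (nat \<Rightarrow> real poly) \<Rightarrow> (nat \<Rightarrow> real poly)
    \<Rightarrow> nat \<Rightarrow> (nat \<Rightarrow> complex poly) \<Rightarrow> complex \<Rightarrow> complex" where
  "TA0 mu ep v t m a z =
     poly (map_poly of_real (TT t m)) z *
       (poly (a 0) z + (\<Sum>k=1..m. (-1)^k * poly (a k) z * hat_s mu ep 1 k z))
     + (\<Sum>k=1..m. (-1)^k * poly (a k) z * poly (map_poly of_real ((TT t m div t k) * v k)) z)"

definition is_HP :: "(nat \<Rightarrow> real measure) \<Rightarrow> (nat \<Rightarrow> real) \<Rightarrow> (nat \<Rightarrow> real poly) \<Rightarrow> (nat \<Rightarrow> real poly)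
    \<Rightarrow> nat \<Rightarrow> nat \<Rightarrow> (nat \<Rightarrow> complex poly) \<Rightarrow> bool" where
  "is_HP mu ep v t m n a \<longleftrightarrow>
     (\<exists>j\<le>m. a j \<noteq> 0) \<and>
     (\<forall>j<m. degree (a j) \<le> n - 1) \<and> degree (a m) \<le> n \<and>
     Acal mu ep v t m a 0 \<in> O[at_infinity](\<lambda>z. 1 / z ^ (n + 1)) \<and>
     (\<forall>j\<in>{1..m-1}. Acal mu ep v t m a j \<in> O[at_infinity](\<lambda>z. 1 / z))"

definition Qpoly :: "(nat \<Rightarrow> complex \<Rightarrow> complex) \<Rightarrow> (nat \<Rightarrow> real) \<Rightarrow> (nat \<Rightarrow> real) \<Rightarrow> nat \<Rightarrow> complex poly" where
  "Qpoly A al be j = (\<Prod>x\<in>{x::real. x \<in> {al j..be j} \<and> A j (of_real x) = 0}. [:- of_real x, 1:])"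

end

theory Submission
  imports Defs "HOL-Computational_Algebra.Fundamental_Theorem_Algebra"
begin

lemma IB:
  fixes f :: "real \<Rightarrow> complex"
  assumes "finite_measure M" "AE x in M. norm (f x) \<le> B" "0 \<le> B"
  shows "norm (LINT x|M. f x) \<le> B * measure M (space M)"
proof -
  interpret finite_measure M by fact
  have "norm (LINT x|M. f x) \<le> (LINT x|M. norm (f x))" by (rule integral_norm_bound)
  also have "\<dots> \<le> (LINT x|M. B)"
    by (rule integral_mono_AE') (use assms in auto)
  also have "\<dots> = B * measure M (space M)" by simp
  finally show ?thesis .
qed

lemma conc:
  fixes M :: "real measure"
  assumes sets: "sets M = sets borel" and hull: "convex hull (msupp M) = {a..b}"
  shows "AE x in M. x \<in> {a..b}"
proof -
  let ?F = "{ball x e | x e. e > 0 \<and> emeasure M (ball x e) = 0}"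
  obtain F' where F': "F' \<subseteq> ?F" "countable F'" "\<Union>F' = \<Union>?F"
    using Lindelof[of ?F] by auto
  have sub: "- {a..b} \<subseteq> \<Union>?F"
  proof
    fix x assume "x \<in> - {a..b}"
    then have "x \<notin> msupp M" using hull_subset[of "msupp M" convex] hull by auto
    then obtain e where "e > 0" "\<not> emeasure M (ball x e) > 0" unfolding msupp_def by auto
    then have "emeasure M (ball x e) = 0" by (simp add: not_gr_zero)
    then show "x \<in> \<Union>?F" using \<open>e>0\<close> by force
  qed
  have "AE x in M. \<forall>B\<in>F'. x \<notin> B"
  proof (subst AE_ball_countable[OF F'(2)], intro ballI)
    fix B assume "B \<in> F'"
    then obtain y e where B: "B = ball y e" "emeasure M (ball y e) = 0" using F'(1) by auto
    have "B \<in> sets M" using B sets by simp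
    then have "B \<in> null_sets M" using B by (auto intro!: null_setsI)
    then show "AE x in M. x \<notin> B" by (rule AE_not_in)
  qed
  then show ?thesis
  proof eventually_elim
    case (elim x)
    then have "x \<notin> \<Union>F'" by blast
    then have "x \<notin> \<Union>?F" using F'(3) by simp
    then show ?case using sub by (meson ComplI subsetD)
  qed
qed


definition good :: "real \<Rightarrow> real \<Rightarrow> (real \<Rightarrow> complex) \<Rightarrow> bool" where
  "good a b w \<longleftrightarrow> w \<in> borel_measurable borel \<and> (\<exists>B. \<forall>x\<in>{a..b}. cmod (w x) \<le> B)"

lemma good_cont:
  assumes "continuous_on UNIV w" shows "good a b w"
proof -
  have "compact (w ` {a..b})"
    by (rule compact_continuous_image[OF continuous_on_subset[OF assms] compact_Icc]) auto
  then obtain B where "\<forall>y\<in>w ` {a..b}. norm y \<le> B" using compact_imp_bounded bounded_iff by metis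
  then show ?thesis unfolding good_def using borel_measurable_continuous_onI[OF assms] by auto
qed

lemma good_const: "good a b (\<lambda>x. c)"
  by (rule good_cont) (auto intro: continuous_intros)

lemma good_poly: "good a b (\<lambda>x. poly p (of_real x))"
  by (rule good_cont) (auto intro!: continuous_intros)

lemma good_pow: "good a b (\<lambda>x. (of_real x :: complex) ^ k)"
  by (rule good_cont) (auto intro!: continuous_intros)

lemma good_add: "good a b f \<Longrightarrow> good a b g \<Longrightarrow> good a b (\<lambda>x. f x + g x)"
  unfolding good_def
proof (elim conjE exE, intro conjI)
  fix B1 B2 assume "\<forall>x\<in>{a..b}. cmod (f x) \<le> B1" "\<forall>x\<in>{a..b}. cmod (g x) \<le> B2"
  then show "\<exists>B. \<forall>x\<in>{a..b}. cmod (f x + g x) \<le> B"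
    by (intro exI[of _ "B1 + B2"]) (auto intro: norm_triangle_le add_mono)
qed auto

lemma good_mult: "good a b f \<Longrightarrow> good a b g \<Longrightarrow> good a b (\<lambda>x. f x * g x)"
  unfolding good_def
proof (elim conjE exE, intro conjI)
  fix B1 B2 assume 1: "\<forall>x\<in>{a..b}. cmod (f x) \<le> B1" and 2: "\<forall>x\<in>{a..b}. cmod (g x) \<le> B2"
  show "\<exists>B. \<forall>x\<in>{a..b}. cmod (f x * g x) \<le> B"
  proof (intro exI[of _ "B1 * B2"] ballI)
    fix x assume x: "x \<in> {a..b}"
    have "cmod (f x * g x) = cmod (f x) * cmod (g x)" by (simp add: norm_mult)
    also have "\<dots> \<le> B1 * B2" using 1 2 x by (intro mult_mono) (auto intro: order_trans[OF norm_ge_zero])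
    finally show "cmod (f x * g x) \<le> B1 * B2" .
  qed
qed auto

lemma good_uminus: "good a b f \<Longrightarrow> good a b (\<lambda>x. - f x)"
  unfolding good_def by auto

lemma good_diff: "good a b f \<Longrightarrow> good a b g \<Longrightarrow> good a b (\<lambda>x. f x - g x)"
  using good_add[of a b f "\<lambda>x. - g x"] good_uminus[of a b g] by simp

lemma good_sum: "finite I \<Longrightarrow> (\<And>i. i \<in> I \<Longrightarrow> good a b (f i)) \<Longrightarrow> good a b (\<lambda>x. \<Sum>i\<in>I. f i x)"
  by (induction I rule: finite_induct) (auto intro: good_add good_const)

lemma good_inv_poly:
  assumes "\<forall>x\<in>{a..b}. poly Q (of_real x) \<noteq> 0"
  shows "good a b (\<lambda>x. 1 / poly Q (of_real x))"
proof -
  have "continuous_on {a..b} (\<lambda>x. 1 / poly Q (of_real x))"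
    using assms by (auto intro!: continuous_intros)
  then have "compact ((\<lambda>x. 1 / poly Q (of_real x)) ` {a..b})"
    by (rule compact_continuous_image[OF _ compact_Icc])
  then obtain B where "\<forall>y\<in>(\<lambda>x. 1 / poly Q (of_real x)) ` {a..b}. norm y \<le> B"
    using compact_imp_bounded bounded_iff by metis
  moreover have "(\<lambda>x. 1 / poly Q (of_real x)) \<in> borel_measurable borel"
    by (intro borel_measurable_divide borel_measurable_const borel_measurable_continuous_onI)
       (auto intro!: continuous_intros)
  ultimately show ?thesis unfolding good_def by auto
qed

lemma dist_pos:
  assumes "z \<notin> (of_real ` {a..b} :: complex set)"
  shows "\<exists>\<delta>>0. \<forall>y\<in>{a..b}. \<delta> \<le> cmod (z - of_real y)"
proof (cases "a \<le> b")
  case False then show ?thesis by (intro exI[of _ 1]) auto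
next
  case True
  let ?S = "(of_real ` {a..b} :: complex set)"
  have "compact ?S" by (intro compact_continuous_image compact_Icc continuous_intros)
  then have "closed ?S" by (rule compact_imp_closed)
  moreover have "?S \<noteq> {}" using True by auto
  ultimately have "infdist z ?S > 0" using infdist_pos_not_in_closed assms by blast
  moreover have "\<forall>y\<in>{a..b}. infdist z ?S \<le> cmod (z - of_real y)"
    using infdist_le[of _ ?S z] by (auto simp: dist_norm)
  ultimately show ?thesis by blast
qed

definition decay :: "(complex \<Rightarrow> complex) \<Rightarrow> nat \<Rightarrow> bool" where
  "decay f k \<longleftrightarrow> (\<exists>C R. 0 \<le> C \<and> (\<forall>z. R \<le> cmod z \<longrightarrow> cmod (f z) \<le> C / cmod z ^ k))"

lemma decay_bigo:
  assumes "f \<in> O[at_infinity](\<lambda>z. 1 / z ^ k)"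
  shows "decay f k"
proof -
  obtain c where c: "c > 0" "eventually (\<lambda>z. norm (f z) \<le> c * norm (1 / z ^ k)) at_infinity"
    using landau_o.bigE[OF assms] by blast
  then obtain R where "\<forall>z. R \<le> norm z \<longrightarrow> norm (f z) \<le> c * norm (1 / z ^ k)"
    unfolding eventually_at_infinity by blast
  then show ?thesis unfolding decay_def using c(1)
    by (intro exI[of _ c] exI[of _ R]) (auto simp: norm_divide norm_power)
qed

lemma decay_cong:
  assumes "decay f k" "\<forall>z. R \<le> cmod z \<longrightarrow> g z = f z"
  shows "decay g k"
proof -
  obtain C R' where "0 \<le> C" "\<forall>z. R' \<le> cmod z \<longrightarrow> cmod (f z) \<le> C / cmod z ^ k"
    using assms(1) unfolding decay_def by blast
  then show ?thesis unfolding decay_def using assms(2)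
    by (intro exI[of _ C] exI[of _ "max R R'"]) auto
qed

lemma decay_add:
  assumes "decay f k" "decay g k"
  shows "decay (\<lambda>z. f z + g z) k"
proof -
  obtain C R where C: "0 \<le> C" "\<forall>z. R \<le> cmod z \<longrightarrow> cmod (f z) \<le> C / cmod z ^ k"
    using assms(1) unfolding decay_def by blast
  obtain C' R' where C': "0 \<le> C'" "\<forall>z. R' \<le> cmod z \<longrightarrow> cmod (g z) \<le> C' / cmod z ^ k"
    using assms(2) unfolding decay_def by blast
  have "\<forall>z. max R R' \<le> cmod z \<longrightarrow> cmod (f z + g z) \<le> (C + C') / cmod z ^ k"
  proof (intro allI impI)
    fix z assume "max R R' \<le> cmod z"
    then have "cmod (f z + g z) \<le> C / cmod z ^ k + C' / cmod z ^ k"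
      using C C' by (intro norm_triangle_le add_mono) auto
    then show "cmod (f z + g z) \<le> (C + C') / cmod z ^ k" by (simp add: add_divide_distrib)
  qed
  then show ?thesis unfolding decay_def using C C'
    by (intro exI[of _ "C + C'"] exI[of _ "max R R'"]) auto
qed

lemma decay_cmult:
  assumes "decay f k"
  shows "decay (\<lambda>z. c * f z) k"
proof -
  obtain C R where C: "0 \<le> C" "\<forall>z. R \<le> cmod z \<longrightarrow> cmod (f z) \<le> C / cmod z ^ k"
    using assms(1) unfolding decay_def by blast
  have "\<forall>z. R \<le> cmod z \<longrightarrow> cmod (c * f z) \<le> cmod c * C / cmod z ^ k"
  proof (intro allI impI)
    fix z assume "R \<le> cmod z"
    then have "cmod c * cmod (f z) \<le> cmod c * (C / cmod z ^ k)" using C by (intro mult_left_mono) auto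
    then show "cmod (c * f z) \<le> cmod c * C / cmod z ^ k" by (simp add: norm_mult)
  qed
  then show ?thesis unfolding decay_def using C
    by (intro exI[of _ "cmod c * C"] exI[of _ R]) auto
qed

lemma decay_diff:
  assumes "decay f k" "decay g k"
  shows "decay (\<lambda>z. f z - g z) k"
  using decay_add[OF assms(1) decay_cmult[OF assms(2), of "-1"]] by simp

lemma decay_mono:
  assumes "decay f k" "k' \<le> k"
  shows "decay f k'"
proof -
  obtain C R where C: "0 \<le> C" "\<forall>z. R \<le> cmod z \<longrightarrow> cmod (f z) \<le> C / cmod z ^ k"
    using assms(1) unfolding decay_def by blast
  have "\<forall>z. max R 1 \<le> cmod z \<longrightarrow> cmod (f z) \<le> C / cmod z ^ k'"
  proof (intro allI impI)
    fix z assume z: "max R 1 \<le> cmod z"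
    then have zp: "0 < cmod z" by auto
    have "cmod z ^ k' \<le> cmod z ^ k" using z assms(2) by (intro power_increasing) auto
    then have "C / cmod z ^ k \<le> C / cmod z ^ k'" using zp C
      by (intro divide_left_mono mult_pos_pos zero_less_power) auto
    then show "cmod (f z) \<le> C / cmod z ^ k'" using C z by force
  qed
  then show ?thesis unfolding decay_def using C
    by (intro exI[of _ C] exI[of _ "max R 1"]) auto
qed

lemma decay_poly_zero:
  assumes "decay (poly P) 1"
  shows "P = 0"
proof (rule ccontr)
  assume P: "P \<noteq> 0"
  obtain C R where C: "0 \<le> C" "\<forall>z. R \<le> cmod z \<longrightarrow> cmod (poly P z) \<le> C / cmod z ^ 1"
    using assms(1) unfolding decay_def by blast
  obtain r where r: "\<forall>z. r \<le> norm z \<longrightarrow> C + 1 \<le> norm (poly (pCons 0 P) z)"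
    using poly_infinity[OF P, of "C + 1" 0] by blast
  define z where "z = (of_real (max r (max R 1)) :: complex)"
  have nz: "cmod z = max r (max R 1)" unfolding z_def by simp
  have "C + 1 \<le> cmod (z * poly P z)" using r nz by auto
  also have "\<dots> = cmod z * cmod (poly P z)" by (simp add: norm_mult)
  also have "\<dots> \<le> cmod z * (C / cmod z)"
  proof -
    have "R \<le> cmod z" using nz by simp
    then have "cmod (poly P z) \<le> C / cmod z" using C(2) by simp
    then show ?thesis by (intro mult_left_mono) auto
  qed
  also have "\<dots> = C" using nz by simp
  finally show False by simp
qed

lemma decay_const_zero:
  assumes "decay (\<lambda>z. c) 1"
  shows "c = 0"
proof -
  have "poly [:c:] = (\<lambda>z. c)" by (rule ext) simp
  then have "decay (poly [:c:]) 1" using assms by simp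
  then have "[:c:] = 0" by (rule decay_poly_zero)
  then show ?thesis by simp
qed


lemma decay_mult_pow:
  assumes "decay f (k + j)"
  shows "decay (\<lambda>z. z ^ j * f z) k"
proof -
  obtain C R where C: "0 \<le> C" "\<forall>z. R \<le> cmod z \<longrightarrow> cmod (f z) \<le> C / cmod z ^ (k + j)"
    using assms(1) unfolding decay_def by blast
  have "\<forall>z. max R 1 \<le> cmod z \<longrightarrow> cmod (z ^ j * f z) \<le> C / cmod z ^ k"
  proof (intro allI impI)
    fix z assume z: "max R 1 \<le> cmod z"
    then have zp: "0 < cmod z" by auto
    have "cmod (z ^ j * f z) = cmod z ^ j * cmod (f z)" by (simp add: norm_mult norm_power)
    also have "\<dots> \<le> cmod z ^ j * (C / cmod z ^ (k + j))" using C z by (intro mult_left_mono) auto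
    also have "\<dots> = C / cmod z ^ k" using zp by (simp add: power_add field_simps)
    finally show "cmod (z ^ j * f z) \<le> C / cmod z ^ k" .
  qed
  then show ?thesis unfolding decay_def using C
    by (intro exI[of _ C] exI[of _ "max R 1"]) auto
qed

locale cm =
  fixes M :: "real measure" and a b :: real
  assumes fin: "finite_measure M" and sets_M: "sets M = sets borel" and ae: "AE x in M. x \<in> {a..b}"
begin

lemma measM: "f \<in> borel_measurable borel \<Longrightarrow> f \<in> borel_measurable M"
  by (simp add: measurable_cong_sets[OF sets_M refl])

lemma good_meas: "good a b w \<Longrightarrow> w \<in> borel_measurable M"
  unfolding good_def using measM by auto

lemma good_integrable:
  assumes g: "good a b w" shows "integrable M w"
proof -
  interpret finite_measure M by (rule fin)
  obtain B where B: "\<forall>x\<in>{a..b}. cmod (w x) \<le> B" using g unfolding good_def by auto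
  have "AE x in M. cmod (w x) \<le> B" using ae by eventually_elim (use B in auto)
  then show ?thesis using good_meas[OF g] by (rule integrable_const_bound)
qed

lemma ct_int:
  assumes g: "good a b w" and z: "z \<notin> (of_real ` {a..b} :: complex set)"
  shows "integrable M (\<lambda>x. w x / (z - of_real x))"
proof -
  interpret finite_measure M by (rule fin)
  obtain B where B: "\<forall>x\<in>{a..b}. cmod (w x) \<le> B" using g unfolding good_def by auto
  obtain \<delta> where d: "\<delta> > 0" "\<forall>y\<in>{a..b}. \<delta> \<le> cmod (z - of_real y)" using dist_pos[OF z] by auto
  have "AE x in M. cmod (w x / (z - of_real x)) \<le> max B 0 / \<delta>"
    using ae
  proof eventually_elim
    case (elim x)
    have "cmod (w x / (z - of_real x)) = cmod (w x) / cmod (z - of_real x)" by (simp add: norm_divide)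
    also have "\<dots> \<le> max B 0 / \<delta>"
    proof (rule frac_le)
      show "cmod (w x) \<le> max B 0" using B elim by (meson max.coboundedI1)
    qed (use d elim in auto)
    finally show ?case .
  qed
  moreover have "(\<lambda>x. w x / (z - of_real x)) \<in> borel_measurable M"
    by (intro borel_measurable_divide good_meas[OF g] measM borel_measurable_continuous_onI)
       (auto intro!: continuous_intros)
  ultimately show ?thesis by (rule integrable_const_bound)
qed

lemma ct_decay:
  assumes g: "good a b w"
  shows "decay (\<lambda>z. LINT x|M. w x / (z - of_real x)) 1"
proof -
  obtain B0 where B0: "\<forall>x\<in>{a..b}. cmod (w x) \<le> B0" using g unfolding good_def by auto
  define B where "B = max B0 0"
  have B: "\<forall>x\<in>{a..b}. cmod (w x) \<le> B" "B \<ge> 0" using B0 unfolding B_def by force+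
  define mu where "mu = measure M (space M)"
  have mu: "mu \<ge> 0" unfolding mu_def by simp
  define R where "R = 2 * (\<bar>a\<bar> + \<bar>b\<bar>) + 1"
  have "\<forall>z. R \<le> cmod z \<longrightarrow> cmod (LINT x|M. w x / (z - of_real x)) \<le> (2 * B * mu) / cmod z ^ 1"
  proof (intro allI impI)
    fix z :: complex assume z: "R \<le> cmod z"
    then have zp: "0 < cmod z" unfolding R_def by auto
    have "AE x in M. cmod (w x / (z - of_real x)) \<le> 2 * B / cmod z"
      using ae
    proof eventually_elim
      case (elim x)
      have xb: "\<bar>x\<bar> \<le> \<bar>a\<bar> + \<bar>b\<bar>" using elim by auto
      have "cmod z - \<bar>x\<bar> \<le> cmod (z - of_real x)"
        using norm_triangle_ineq2[of z "of_real x"] by simp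
      moreover have "cmod z / 2 \<le> cmod z - \<bar>x\<bar>" using xb z unfolding R_def by auto
      ultimately have dz: "cmod z / 2 \<le> cmod (z - of_real x)" by linarith
      have "cmod (w x / (z - of_real x)) = cmod (w x) / cmod (z - of_real x)" by (simp add: norm_divide)
      also have "\<dots> \<le> B / (cmod z / 2)" using B elim dz zp by (intro frac_le) auto
      finally show ?case by (simp add: mult.commute)
    qed
    then have "cmod (LINT x|M. w x / (z - of_real x)) \<le> 2 * B / cmod z * mu"
      unfolding mu_def using B zp by (intro IB fin) auto
    then show "cmod (LINT x|M. w x / (z - of_real x)) \<le> (2 * B * mu) / cmod z ^ 1" by simp
  qed
  then show ?thesis unfolding decay_def using B mu
    by (intro exI[of _ "2 * B * mu"] exI[of _ R]) auto
qed

end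


context cm begin

lemma poly_ct:
  fixes p :: "complex poly"
  assumes w: "good a b w"
  shows "\<exists>H. (H = 0 \<or> degree H < degree p) \<and> (\<forall>z. z \<notin> of_real ` {a..b} \<longrightarrow>
     (LINT x|M. w x * (poly p z - poly p (of_real x)) / (z - of_real x)) = poly H z)"
proof -
  define d where "d = degree p"
  define K where "K i l = coeff p i * (LINT x|M. w x * of_real x ^ (i - Suc l))" for i l
  define H where "H = (\<Sum>i\<le>d. \<Sum>l<i. monom (K i l) l)"
  have Hz: "poly H z = (\<Sum>i\<le>d. \<Sum>l<i. K i l * z ^ l)" for z
    by (simp add: H_def poly_sum poly_monom)
  have deg: "H = 0 \<or> degree H < degree p"
  proof (cases "d = 0")
    case True then show ?thesis by (simp add: H_def)
  next
    case False
    have "degree H \<le> d - 1" unfolding H_def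
      by (intro degree_sum_le finite_atMost finite_lessThan order_trans[OF degree_monom_le]) auto
    then show ?thesis using False unfolding d_def by (intro disjI2) arith
  qed
  have int: "integrable M (\<lambda>x. w x * of_real x ^ k)" for k
    by (intro good_integrable good_mult w good_pow)
  have "\<forall>z. z \<notin> of_real ` {a..b} \<longrightarrow>
     (LINT x|M. w x * (poly p z - poly p (of_real x)) / (z - of_real x)) = poly H z"
  proof (intro allI impI)
    fix z :: complex assume z: "z \<notin> of_real ` {a..b}"
    have pw: "w x * (poly p z - poly p (of_real x)) / (z - of_real x) =
        (\<Sum>i\<le>d. \<Sum>l<i. z ^ l * (coeff p i * (w x * of_real x ^ (i - Suc l))))" if x: "x \<in> {a..b}" for x
    proof -
      have ne: "z - of_real x \<noteq> 0" using z x by auto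
      have t: "coeff p i * (z ^ i - of_real x ^ i) =
          (z - of_real x) * (\<Sum>l<i. coeff p i * (of_real x ^ (i - Suc l) * z ^ l))" for i
        by (subst power_diff_sumr2) (simp add: sum_distrib_left mult_ac)
      have "poly p z - poly p (of_real x) = (\<Sum>i\<le>d. coeff p i * (z ^ i - of_real x ^ i))"
        by (simp add: poly_altdef d_def sum_subtractf right_diff_distrib)
      also have "\<dots> = (z - of_real x) * (\<Sum>i\<le>d. \<Sum>l<i. coeff p i * (of_real x ^ (i - Suc l) * z ^ l))"
        by (simp add: t sum_distrib_left)
      finally have "w x * (poly p z - poly p (of_real x)) / (z - of_real x) =
          w x * (\<Sum>i\<le>d. \<Sum>l<i. coeff p i * (of_real x ^ (i - Suc l) * z ^ l))"
        using ne by simp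
      also have "\<dots> = (\<Sum>i\<le>d. \<Sum>l<i. z ^ l * (coeff p i * (w x * of_real x ^ (i - Suc l))))"
        by (simp add: sum_distrib_left mult_ac)
      finally show ?thesis .
    qed
    have gl: "good a b (\<lambda>x. w x * (poly p z - poly p (of_real x)))"
      by (intro good_mult good_diff w good_const good_poly)
    have "(LINT x|M. w x * (poly p z - poly p (of_real x)) / (z - of_real x)) =
        (LINT x|M. (\<Sum>i\<le>d. \<Sum>l<i. z ^ l * (coeff p i * (w x * of_real x ^ (i - Suc l)))))"
    proof (rule integral_cong_AE)
      show "(\<lambda>x. w x * (poly p z - poly p (of_real x)) / (z - of_real x)) \<in> borel_measurable M"
        using ct_int[OF gl z] by (rule borel_measurable_integrable)
      show "(\<lambda>x. \<Sum>i\<le>d. \<Sum>l<i. z ^ l * (coeff p i * (w x * of_real x ^ (i - Suc l)))) \<in> borel_measurable M"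
        by (intro borel_measurable_integrable Bochner_Integration.integrable_sum Bochner_Integration.integrable_mult_right int)
      show "AE x in M. w x * (poly p z - poly p (of_real x)) / (z - of_real x) =
          (\<Sum>i\<le>d. \<Sum>l<i. z ^ l * (coeff p i * (w x * of_real x ^ (i - Suc l))))"
        using ae by eventually_elim (rule pw)
    qed
    also have "\<dots> = (\<Sum>i\<le>d. \<Sum>l<i. z ^ l * (coeff p i * (LINT x|M. w x * of_real x ^ (i - Suc l))))"
      by (simp add: Bochner_Integration.integral_sum Bochner_Integration.integrable_sum int)
    also have "\<dots> = poly H z" by (simp add: Hz K_def mult_ac)
    finally show "(LINT x|M. w x * (poly p z - poly p (of_real x)) / (z - of_real x)) = poly H z" .
  qed
  then show ?thesis using deg by blast
qed

lemma split1:
  fixes q :: "complex poly"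
  assumes S: "good a b S"
  shows "\<exists>H. \<forall>z. z \<notin> of_real ` {a..b} \<longrightarrow>
     poly q z * (LINT x|M. S x / (z - of_real x)) =
     (LINT x|M. poly q (of_real x) * S x / (z - of_real x)) + poly H z"
proof -
  obtain H where H: "\<forall>z. z \<notin> of_real ` {a..b} \<longrightarrow>
     (LINT x|M. S x * (poly q z - poly q (of_real x)) / (z - of_real x)) = poly H z"
    using poly_ct[OF S, of q] by blast
  have "\<forall>z. z \<notin> of_real ` {a..b} \<longrightarrow>
     poly q z * (LINT x|M. S x / (z - of_real x)) =
     (LINT x|M. poly q (of_real x) * S x / (z - of_real x)) + poly H z"
  proof (intro allI impI)
    fix z :: complex assume z: "z \<notin> of_real ` {a..b}"
    have i1: "integrable M (\<lambda>x. poly q (of_real x) * S x / (z - of_real x))"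
      by (intro ct_int z good_mult good_poly S)
    have i2: "integrable M (\<lambda>x. S x * (poly q z - poly q (of_real x)) / (z - of_real x))"
      by (intro ct_int z good_mult good_diff good_poly good_const S)
    have "poly q z * (LINT x|M. S x / (z - of_real x)) = (LINT x|M. poly q z * (S x / (z - of_real x)))"
      by (rule integral_mult_right_zero[symmetric])
    also have "\<dots> = (LINT x|M. poly q (of_real x) * S x / (z - of_real x) +
                       S x * (poly q z - poly q (of_real x)) / (z - of_real x))"
    proof (rule integral_cong_AE)
      show "(\<lambda>x. poly q z * (S x / (z - of_real x))) \<in> borel_measurable M"
        by (intro borel_measurable_integrable Bochner_Integration.integrable_mult_right ct_int S z)
      show "(\<lambda>x. poly q (of_real x) * S x / (z - of_real x) +
                       S x * (poly q z - poly q (of_real x)) / (z - of_real x)) \<in> borel_measurable M"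
        by (intro borel_measurable_integrable Bochner_Integration.integrable_add i1 i2)
      show "AE x in M. poly q z * (S x / (z - of_real x)) = poly q (of_real x) * S x / (z - of_real x) +
                       S x * (poly q z - poly q (of_real x)) / (z - of_real x)"
        using ae
      proof eventually_elim
        case (elim x)
        have e: "poly q (of_real x) * S x + S x * (poly q z - poly q (of_real x)) = poly q z * S x"
          by (simp add: algebra_simps)
        have "poly q (of_real x) * S x / (z - of_real x) + S x * (poly q z - poly q (of_real x)) / (z - of_real x)
            = (poly q (of_real x) * S x + S x * (poly q z - poly q (of_real x))) / (z - of_real x)"
          by (rule add_divide_distrib[symmetric])
        then show ?case using e by simp
      qed
    qed
    also have "\<dots> = (LINT x|M. poly q (of_real x) * S x / (z - of_real x)) + poly H z"
      using H z i1 i2 by (simp add: Bochner_Integration.integral_add)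
    finally show "poly q z * (LINT x|M. S x / (z - of_real x)) =
     (LINT x|M. poly q (of_real x) * S x / (z - of_real x)) + poly H z" .
  qed
  then show ?thesis by blast
qed

lemma split:
  fixes I :: "nat set" and p :: "nat \<Rightarrow> complex poly" and S :: "nat \<Rightarrow> real \<Rightarrow> complex"
    and c :: "nat \<Rightarrow> complex"
  assumes I: "finite I" and S: "\<And>k. k \<in> I \<Longrightarrow> good a b (S k)"
  shows "\<exists>H. \<forall>z. z \<notin> of_real ` {a..b} \<longrightarrow>
     (\<Sum>k\<in>I. c k * poly (p k) z * (LINT x|M. S k x / (z - of_real x))) =
     (LINT x|M. (\<Sum>k\<in>I. c k * poly (p k) (of_real x) * S k x) / (z - of_real x)) + poly H z"
proof -
  have "\<forall>k\<in>I. \<exists>H. \<forall>z. z \<notin> of_real ` {a..b} \<longrightarrow>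
     poly (smult (c k) (p k)) z * (LINT x|M. S k x / (z - of_real x)) =
     (LINT x|M. poly (smult (c k) (p k)) (of_real x) * S k x / (z - of_real x)) + poly H z"
    using split1 S by blast
  then obtain Hk where Hk: "\<And>k z. k \<in> I \<Longrightarrow> z \<notin> of_real ` {a..b} \<Longrightarrow>
     poly (smult (c k) (p k)) z * (LINT x|M. S k x / (z - of_real x)) =
     (LINT x|M. poly (smult (c k) (p k)) (of_real x) * S k x / (z - of_real x)) + poly (Hk k) z"
    by metis
  have "\<forall>z. z \<notin> of_real ` {a..b} \<longrightarrow>
     (\<Sum>k\<in>I. c k * poly (p k) z * (LINT x|M. S k x / (z - of_real x))) =
     (LINT x|M. (\<Sum>k\<in>I. c k * poly (p k) (of_real x) * S k x) / (z - of_real x)) + poly (\<Sum>k\<in>I. Hk k) z"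
  proof (intro allI impI)
    fix z :: complex assume z: "z \<notin> of_real ` {a..b}"
    have ik: "integrable M (\<lambda>x. c k * poly (p k) (of_real x) * S k x / (z - of_real x))" if "k \<in> I" for k
      by (intro ct_int z good_mult good_poly good_const S that)
    have "(\<Sum>k\<in>I. c k * poly (p k) z * (LINT x|M. S k x / (z - of_real x))) =
        (\<Sum>k\<in>I. (LINT x|M. c k * poly (p k) (of_real x) * S k x / (z - of_real x)) + poly (Hk k) z)"
      using Hk z by (intro sum.cong refl) simp
    also have "\<dots> = (\<Sum>k\<in>I. LINT x|M. c k * poly (p k) (of_real x) * S k x / (z - of_real x)) + poly (\<Sum>k\<in>I. Hk k) z"
      by (simp add: sum.distrib poly_sum)
    also have "(\<Sum>k\<in>I. LINT x|M. c k * poly (p k) (of_real x) * S k x / (z - of_real x)) =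
        (LINT x|M. (\<Sum>k\<in>I. c k * poly (p k) (of_real x) * S k x / (z - of_real x)))"
      by (rule Bochner_Integration.integral_sum[symmetric]) (rule ik)
    also have "\<dots> = (LINT x|M. (\<Sum>k\<in>I. c k * poly (p k) (of_real x) * S k x) / (z - of_real x))"
      by (simp add: sum_divide_distrib)
    finally show "(\<Sum>k\<in>I. c k * poly (p k) z * (LINT x|M. S k x / (z - of_real x))) =
     (LINT x|M. (\<Sum>k\<in>I. c k * poly (p k) (of_real x) * S k x) / (z - of_real x)) + poly (\<Sum>k\<in>I. Hk k) z" .
  qed
  then show ?thesis by blast
qed

end


context cm begin

lemma moment:
  assumes w: "good a b w" and dec: "decay (\<lambda>z. LINT x|M. w x / (z - of_real x)) (Suc K)"
  shows "\<forall>\<nu><K. (LINT x|M. of_real x ^ \<nu> * w x) = 0"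
proof -
  define h where "h \<nu> z = (LINT x|M. of_real x ^ \<nu> * w x / (z - of_real x))" for \<nu> z
  define c where "c \<nu> = (LINT x|M. of_real x ^ \<nu> * w x)" for \<nu>
  have gw: "good a b (\<lambda>x. of_real x ^ \<nu> * w x)" for \<nu> by (intro good_mult good_pow w)
  define R0 where "R0 = \<bar>a\<bar> + \<bar>b\<bar> + 1"
  have out: "z \<notin> of_real ` {a..b}" if "R0 \<le> cmod z" for z :: complex
  proof
    assume "z \<in> of_real ` {a..b}" then obtain x where "x\<in>{a..b}" "z = of_real x" by auto
    then show False using that unfolding R0_def by auto
  qed
  have rec: "z * h \<nu> z = c \<nu> + h (Suc \<nu>) z" if z: "z \<notin> of_real ` {a..b}" for \<nu> z
  proof -
    have "z * h \<nu> z = (LINT x|M. z * (of_real x ^ \<nu> * w x / (z - of_real x)))"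
      unfolding h_def by (rule integral_mult_right_zero[symmetric])
    also have "\<dots> = (LINT x|M. of_real x ^ \<nu> * w x + of_real x ^ Suc \<nu> * w x / (z - of_real x))"
    proof (rule integral_cong_AE)
      show "(\<lambda>x. z * (of_real x ^ \<nu> * w x / (z - of_real x))) \<in> borel_measurable M"
        by (intro borel_measurable_integrable Bochner_Integration.integrable_mult_right ct_int gw z)
      show "(\<lambda>x. of_real x ^ \<nu> * w x + of_real x ^ Suc \<nu> * w x / (z - of_real x)) \<in> borel_measurable M"
        by (intro borel_measurable_integrable Bochner_Integration.integrable_add good_integrable gw ct_int z)
      show "AE x in M. z * (of_real x ^ \<nu> * w x / (z - of_real x)) =
           of_real x ^ \<nu> * w x + of_real x ^ Suc \<nu> * w x / (z - of_real x)"
        using ae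
      proof eventually_elim
        case (elim x)
        then have ne: "z - of_real x \<noteq> 0" using z by auto
        show ?case using ne by (simp add: field_simps)
      qed
    qed
    also have "\<dots> = c \<nu> + h (Suc \<nu>) z" unfolding c_def h_def
      by (intro Bochner_Integration.integral_add good_integrable gw ct_int z)
    finally show ?thesis .
  qed
  have dec_h: "decay (h \<nu>) 1" for \<nu> unfolding h_def by (rule ct_decay[OF gw])
  have h0: "h 0 = (\<lambda>z. LINT x|M. w x / (z - of_real x))" unfolding h_def by simp
  have main: "\<nu> \<le> K \<Longrightarrow> (\<forall>i<\<nu>. c i = 0) \<and> (\<exists>R. \<forall>z. R \<le> cmod z \<longrightarrow> z ^ \<nu> * h 0 z = h \<nu> z)" for \<nu>
  proof (induction \<nu>)
    case 0 show ?case by simp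
  next
    case (Suc \<nu>)
    then obtain R where R: "\<forall>z. R \<le> cmod z \<longrightarrow> z ^ \<nu> * h 0 z = h \<nu> z" and ci: "\<forall>i<\<nu>. c i = 0" by auto
    define R' where "R' = max R R0"
    have eq: "z ^ Suc \<nu> * h 0 z - h (Suc \<nu>) z = c \<nu>" if z: "R' \<le> cmod z" for z
    proof -
      have "z ^ Suc \<nu> * h 0 z = z * (z ^ \<nu> * h 0 z)" by (simp add: mult.assoc)
      also have "\<dots> = z * h \<nu> z" using R z by (simp add: R'_def)
      also have "\<dots> = c \<nu> + h (Suc \<nu>) z" using rec out z R'_def by auto
      finally show ?thesis by simp
    qed
    have "decay (h 0) (1 + Suc \<nu>)" using decay_mono[OF dec] h0 Suc.prems by simp
    then have d1: "decay (\<lambda>z. z ^ Suc \<nu> * h 0 z) 1" by (rule decay_mult_pow)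
    have "decay (\<lambda>z. c \<nu>) 1"
      by (rule decay_cong[OF decay_diff[OF d1 dec_h[of "Suc \<nu>"]], where R=R']) (use eq in auto)
    then have c0: "c \<nu> = 0" by (rule decay_const_zero)
    have "\<forall>i<Suc \<nu>. c i = 0" using ci c0 less_Suc_eq by auto
    moreover have "\<forall>z. R' \<le> cmod z \<longrightarrow> z ^ Suc \<nu> * h 0 z = h (Suc \<nu>) z" using eq c0 by auto
    ultimately show ?case by blast
  qed
  show ?thesis
  proof (intro allI impI)
    fix \<nu> assume "\<nu> < K"
    then have "c \<nu> = 0" using main[of "Suc \<nu>"] by auto
    then show "(LINT x|M. of_real x ^ \<nu> * w x) = 0" unfolding c_def .
  qed
qed

end


lemma map_of_real_mult:
  "map_poly (of_real :: real \<Rightarrow> complex) (p * q) = map_poly of_real p * map_poly of_real q"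
  by (rule poly_eqI) (simp add: coeff_map_poly coeff_mult)

lemma poly_growth:
  fixes P :: "complex poly"
  assumes P: "P \<noteq> 0"
  shows "\<exists>R. \<forall>z. R \<le> cmod z \<longrightarrow>
     cmod (lead_coeff P) / 2 * cmod z ^ degree P \<le> cmod (poly P z) \<and>
     cmod (poly P z) \<le> 2 * cmod (lead_coeff P) * cmod z ^ degree P"
proof -
  define r where "r = reflect_poly P"
  define l where "l = cmod (lead_coeff P)"
  have lp: "l > 0" using P unfolding l_def by simp
  have "((\<lambda>z. poly r (inverse z)) \<longlongrightarrow> poly r 0) at_infinity"
    by (rule tendsto_poly[OF tendsto_inverse_0])
  then have tl: "((\<lambda>z. cmod (poly r (inverse z))) \<longlongrightarrow> l) at_infinity"
    unfolding r_def l_def by (simp add: tendsto_norm)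
  have e1: "eventually (\<lambda>z. l / 2 < cmod (poly r (inverse z))) at_infinity"
    by (rule order_tendstoD(1)[OF tl]) (use lp in simp)
  have e2: "eventually (\<lambda>z. cmod (poly r (inverse z)) < 2 * l) at_infinity"
    by (rule order_tendstoD(2)[OF tl]) (use lp in simp)
  have "eventually (\<lambda>z. l / 2 < cmod (poly r (inverse z)) \<and> cmod (poly r (inverse z)) < 2 * l) at_infinity"
    using eventually_conj[OF e1 e2] .
  then obtain R where R: "\<forall>z. R \<le> cmod z \<longrightarrow> l / 2 < cmod (poly r (inverse z)) \<and> cmod (poly r (inverse z)) < 2 * l"
    unfolding eventually_at_infinity by blast
  have "\<forall>z. max R 1 \<le> cmod z \<longrightarrow>
     l / 2 * cmod z ^ degree P \<le> cmod (poly P z) \<and> cmod (poly P z) \<le> 2 * l * cmod z ^ degree P"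
  proof (intro allI impI)
    fix z :: complex assume z: "max R 1 \<le> cmod z"
    then have nz: "z \<noteq> 0" by auto
    have "poly r (inverse z) = inverse z ^ degree P * poly P z"
      unfolding r_def using poly_reflect_poly_nz[of "inverse z" P] nz by simp
    then have e: "poly P z = z ^ degree P * poly r (inverse z)" using nz
      by (simp add: field_simps power_inverse)
    have n: "cmod (poly P z) = cmod z ^ degree P * cmod (poly r (inverse z))"
      unfolding e by (simp add: norm_mult norm_power)
    have u: "0 \<le> cmod z ^ degree P" by simp
    have v: "l / 2 < cmod (poly r (inverse z))" "cmod (poly r (inverse z)) < 2 * l" using R z by auto
    have i1: "l / 2 * cmod z ^ degree P \<le> cmod (poly r (inverse z)) * cmod z ^ degree P"
      by (rule mult_right_mono) (use v u in auto)
    have i2: "cmod (poly r (inverse z)) * cmod z ^ degree P \<le> 2 * l * cmod z ^ degree P"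
      by (rule mult_right_mono) (use v u in auto)
    have n': "cmod (poly P z) = cmod (poly r (inverse z)) * cmod z ^ degree P" using n by simp
    show "l / 2 * cmod z ^ degree P \<le> cmod (poly P z) \<and> cmod (poly P z) \<le> 2 * l * cmod z ^ degree P"
      unfolding n' using i1 i2 by simp
  qed
  then show ?thesis unfolding l_def by blast
qed

lemma prod_integral_meas:
  fixes M :: "real measure" and g :: "real \<Rightarrow> complex"
  assumes sets: "sets M = sets borel" and fin: "finite_measure M" and g: "g \<in> borel_measurable borel"
  shows "(\<lambda>x. LINT y|M. g y / (of_real x - of_real y)) \<in> borel_measurable borel"
proof -
  interpret finite_measure M by (rule fin)
  have m1: "(\<lambda>p::real\<times>real. g (snd p) / (of_real (fst p) - of_real (snd p))) \<in> borel_measurable borel"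
    by (intro borel_measurable_divide measurable_compose[OF _ g] borel_measurable_continuous_onI)
       (auto intro!: continuous_intros)
  have "sets (borel \<Otimes>\<^sub>M M) = sets (borel \<Otimes>\<^sub>M (borel :: real measure))"
    by (rule sets_pair_measure_cong[OF refl sets])
  also have "\<dots> = sets (borel :: (real \<times> real) measure)" by (metis borel_prod)
  finally have eqm: "borel_measurable (borel \<Otimes>\<^sub>M M) = borel_measurable (borel :: (real \<times> real) measure)"
    by (rule measurable_cong_sets) simp
  have "(\<lambda>p::real\<times>real. g (snd p) / (of_real (fst p) - of_real (snd p))) \<in> borel_measurable (borel \<Otimes>\<^sub>M M)"
    unfolding eqm by (rule m1)
  then have "case_prod (\<lambda>x y. g y / (of_real x - of_real y)) \<in> borel_measurable (borel \<Otimes>\<^sub>M M)"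
    by (simp add: case_prod_beta')
  then show ?thesis by (rule borel_measurable_lebesgue_integral)
qed


definition Sf :: "(nat \<Rightarrow> real measure) \<Rightarrow> (nat \<Rightarrow> real) \<Rightarrow> nat \<Rightarrow> nat \<Rightarrow> real \<Rightarrow> complex" where
  "Sf mu ep j k x = (if k = j + 1 then 1 else hat_s mu ep (j + 2) k (of_real x))"

lemma hat_rep:
  assumes "j + 1 \<le> k"
  shows "hat_s mu ep (j+1) k z = of_real (ep (j+1)) * (LINT x|mu (j+1). Sf mu ep j k x / (z - of_real x))"
proof (cases "k = j + 1")
  case True then show ?thesis by (simp add: hat_s_def Sf_def)
next
  case False
  then have k: "k - (j+1) = Suc (k - (j+2))" "j + 2 \<le> k" using assms by auto
  have "hat_s mu ep (j+1) k z = nik_up mu ep (j+1) (Suc (k - (j+2))) z"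
    using assms k(1) by (simp add: hat_s_def)
  also have "\<dots> = of_real (ep (j+1)) * (LINT x|mu (j+1). nik_up mu ep (j+2) (k - (j+2)) (of_real x) / (z - of_real x))"
    by simp
  also have "\<dots> = of_real (ep (j+1)) * (LINT x|mu (j+1). Sf mu ep j k x / (z - of_real x))"
    using False k(2) by (simp add: Sf_def hat_s_def)
  finally show ?thesis .
qed

locale setting =
  fixes m :: nat and mu :: "nat \<Rightarrow> real measure" and ep :: "nat \<Rightarrow> real" and al be :: "nat \<Rightarrow> real"
  assumes m: "m \<ge> 1"
    and intv: "\<forall>j\<in>{1..m}. al j \<le> be j"
    and disj: "\<forall>j\<in>{1..m-1}. {al j..be j} \<inter> {al (j+1)..be (j+1)} = {}"
    and meas: "\<forall>j\<in>{1..m}. sets (mu j) = sets borel \<and> finite_measure (mu j)"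
    and sgn: "\<forall>j\<in>{1..m}. ep j = 1 \<or> ep j = -1"
    and supp: "\<forall>j\<in>{1..m}. infinite (msupp (mu j)) \<and> convex hull (msupp (mu j)) = {al j..be j}"
begin

lemma cmj: assumes j: "j \<in> {1..m}" shows "cm (mu j) (al j) (be j)"
proof -
  have 1: "finite_measure (mu j)" "sets (mu j) = sets borel" using meas j by auto
  have 2: "AE x in mu j. x \<in> {al j..be j}" using meas supp j by (intro conc) auto
  show ?thesis using 1 2 by (intro cm.intro)
qed

lemma ep_pm: assumes "j \<in> {1..m}" shows "ep j = 1 \<or> ep j = -1"
  using sgn assms by blast

lemma ep_norm: assumes "j \<in> {1..m}" shows "cmod (of_real (ep j) :: complex) = 1"
  using ep_pm[OF assms] by auto

lemma ep_sq: assumes "j \<in> {1..m}" shows "ep j * ep j = 1"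
  using ep_pm[OF assms] by auto

lemma gap:
  assumes j: "j \<in> {1..m-1}"
  shows "\<exists>\<delta>>0. \<forall>x\<in>{al j..be j}. \<forall>y\<in>{al (j+1)..be (j+1)}. \<delta> \<le> cmod (of_real x - of_real y :: complex)"
proof -
  have i1: "al j \<le> be j" "al (j+1) \<le> be (j+1)" using intv j by auto
  have d: "{al j..be j} \<inter> {al (j+1)..be (j+1)} = {}" using disj j by auto
  have "be j < al (j+1) \<or> be (j+1) < al j"
  proof (rule ccontr)
    assume "\<not> (be j < al (j+1) \<or> be (j+1) < al j)"
    then have "max (al j) (al (j+1)) \<in> {al j..be j} \<inter> {al (j+1)..be (j+1)}" using i1 by auto
    then show False using d by simp
  qed
  then show ?thesis
  proof
    assume "be j < al (j+1)"
    then show ?thesis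
      by (intro exI[of _ "al (j+1) - be j"]) (auto simp flip: of_real_diff)
  next
    assume "be (j+1) < al j"
    then show ?thesis
      by (intro exI[of _ "al j - be (j+1)"]) (auto simp flip: of_real_diff)
  qed
qed

lemma NB:
  "1 \<le> j \<Longrightarrow> j + d \<le> m \<Longrightarrow> (\<lambda>x. nik_up mu ep j d (of_real x)) \<in> borel_measurable borel \<and>
     (\<forall>\<delta>>0. \<exists>B. \<forall>z. (\<forall>y\<in>{al j..be j}. \<delta> \<le> cmod (z - of_real y)) \<longrightarrow> cmod (nik_up mu ep j d z) \<le> B)"
proof (induction d arbitrary: j)
  case 0
  then have j: "j \<in> {1..m}" by auto
  interpret cm "mu j" "al j" "be j" by (rule cmj[OF j])
  have "(\<lambda>x. LINT y|mu j. (\<lambda>_. 1::complex) y / (of_real x - of_real y)) \<in> borel_measurable borel"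
    by (rule prod_integral_meas[OF sets_M fin]) simp
  then have "(\<lambda>x. (of_real (ep j) :: complex) * (LINT y|mu j. 1 / (of_real x - of_real y))) \<in> borel_measurable borel"
    by (intro borel_measurable_times borel_measurable_const) simp
  moreover have "\<forall>\<delta>>0. \<exists>B. \<forall>z. (\<forall>y\<in>{al j..be j}. \<delta> \<le> cmod (z - of_real y)) \<longrightarrow> cmod (nik_up mu ep j 0 z) \<le> B"
  proof (intro allI impI)
    fix \<delta> :: real assume dp: "\<delta> > 0"
    show "\<exists>B. \<forall>z. (\<forall>y\<in>{al j..be j}. \<delta> \<le> cmod (z - of_real y)) \<longrightarrow> cmod (nik_up mu ep j 0 z) \<le> B"
    proof (intro exI allI impI)
      fix z :: complex assume zd: "\<forall>y\<in>{al j..be j}. \<delta> \<le> cmod (z - of_real y)"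
      have "AE y in mu j. cmod (1 / (z - of_real y)) \<le> 1 / \<delta>"
        using ae
      proof eventually_elim
        case (elim y)
        then have "\<delta> \<le> cmod (z - of_real y)" using zd by auto
        then show ?case using dp by (simp add: norm_divide frac_le)
      qed
      then have "cmod (LINT y|mu j. 1 / (z - of_real y)) \<le> 1 / \<delta> * measure (mu j) (space (mu j))"
        using dp by (intro IB fin) auto
      then show "cmod (nik_up mu ep j 0 z) \<le> 1 / \<delta> * measure (mu j) (space (mu j))"
        using ep_norm[OF j] by (simp add: norm_mult)
    qed
  qed
  ultimately show ?case by simp
next
  case (Suc d)
  then have j: "j \<in> {1..m}" and j1: "j \<in> {1..m-1}" by auto
  interpret cm "mu j" "al j" "be j" by (rule cmj[OF j])
  have IH: "(\<lambda>x. nik_up mu ep (Suc j) d (of_real x)) \<in> borel_measurable borel"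
     "\<forall>\<delta>>0. \<exists>B. \<forall>z. (\<forall>y\<in>{al (Suc j)..be (Suc j)}. \<delta> \<le> cmod (z - of_real y)) \<longrightarrow> cmod (nik_up mu ep (Suc j) d z) \<le> B"
    using Suc.IH[of "Suc j"] Suc.prems by auto
  obtain \<delta>0 where d0: "\<delta>0 > 0" "\<forall>x\<in>{al j..be j}. \<forall>y\<in>{al (j+1)..be (j+1)}. \<delta>0 \<le> cmod (of_real x - of_real y :: complex)"
    using gap[OF j1] by blast
  obtain B' where B': "\<forall>z. (\<forall>y\<in>{al (Suc j)..be (Suc j)}. \<delta>0 \<le> cmod (z - of_real y)) \<longrightarrow> cmod (nik_up mu ep (Suc j) d z) \<le> B'"
    using IH(2) d0(1) by blast
  have gB: "cmod (nik_up mu ep (Suc j) d (of_real y)) \<le> max B' 0" if "y \<in> {al j..be j}" for y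
    using B' d0(2) that by fastforce
  have "(\<lambda>x. LINT y|mu j. nik_up mu ep (Suc j) d (of_real y) / (of_real x - of_real y)) \<in> borel_measurable borel"
    by (rule prod_integral_meas[OF sets_M fin IH(1)])
  then have "(\<lambda>x. (of_real (ep j) :: complex) * (LINT y|mu j. nik_up mu ep (Suc j) d (of_real y) / (of_real x - of_real y))) \<in> borel_measurable borel"
    by (intro borel_measurable_times borel_measurable_const) simp
  moreover have "\<forall>\<delta>>0. \<exists>B. \<forall>z. (\<forall>y\<in>{al j..be j}. \<delta> \<le> cmod (z - of_real y)) \<longrightarrow> cmod (nik_up mu ep j (Suc d) z) \<le> B"
  proof (intro allI impI)
    fix \<delta> :: real assume dp: "\<delta> > 0"
    show "\<exists>B. \<forall>z. (\<forall>y\<in>{al j..be j}. \<delta> \<le> cmod (z - of_real y)) \<longrightarrow> cmod (nik_up mu ep j (Suc d) z) \<le> B"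
    proof (intro exI allI impI)
      fix z :: complex assume zd: "\<forall>y\<in>{al j..be j}. \<delta> \<le> cmod (z - of_real y)"
      have "AE y in mu j. cmod (nik_up mu ep (Suc j) d (of_real y) / (z - of_real y)) \<le> max B' 0 / \<delta>"
        using ae
      proof eventually_elim
        case (elim y)
        then have "\<delta> \<le> cmod (z - of_real y)" using zd by auto
        then show ?case using dp gB[OF elim] by (simp add: norm_divide frac_le)
      qed
      then have "cmod (LINT y|mu j. nik_up mu ep (Suc j) d (of_real y) / (z - of_real y)) \<le> max B' 0 / \<delta> * measure (mu j) (space (mu j))"
        using dp by (intro IB fin) auto
      then show "cmod (nik_up mu ep j (Suc d) z) \<le> max B' 0 / \<delta> * measure (mu j) (space (mu j))"
        using ep_norm[OF j] by (simp add: norm_mult)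
    qed
  qed
  ultimately show ?case by simp
qed

lemma Sf_good:
  assumes "j + 1 \<le> k" "k \<le> m"
  shows "good (al (j+1)) (be (j+1)) (Sf mu ep j k)"
proof (cases "k = j + 1")
  case True
  then have "Sf mu ep j k = (\<lambda>x. 1)" by (simp add: Sf_def fun_eq_iff)
  then show ?thesis by (simp add: good_const)
next
  case False
  then have k: "j + 2 \<le> k" using assms by auto
  then have j1: "j + 1 \<in> {1..m-1}" using assms by auto
  have e: "Sf mu ep j k = (\<lambda>x. nik_up mu ep (j+2) (k - (j+2)) (of_real x))"
    using False k by (simp add: Sf_def hat_s_def fun_eq_iff)
  have nb: "(\<lambda>x. nik_up mu ep (j+2) (k - (j+2)) (of_real x)) \<in> borel_measurable borel"
     "\<forall>\<delta>>0. \<exists>B. \<forall>z. (\<forall>y\<in>{al (j+2)..be (j+2)}. \<delta> \<le> cmod (z - of_real y)) \<longrightarrow> cmod (nik_up mu ep (j+2) (k - (j+2)) z) \<le> B"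
    using NB[of "j+2" "k - (j+2)"] k assms by auto
  obtain \<delta>0 where d0: "\<delta>0 > 0" "\<forall>x\<in>{al (j+1)..be (j+1)}. \<forall>y\<in>{al (j+1+1)..be (j+1+1)}. \<delta>0 \<le> cmod (of_real x - of_real y :: complex)"
    using gap[OF j1] by blast
  obtain B where B: "\<forall>z. (\<forall>y\<in>{al (j+2)..be (j+2)}. \<delta>0 \<le> cmod (z - of_real y)) \<longrightarrow> cmod (nik_up mu ep (j+2) (k - (j+2)) z) \<le> B"
    using nb(2) d0(1) by blast
  have "\<forall>x\<in>{al (j+1)..be (j+1)}. cmod (nik_up mu ep (j+2) (k - (j+2)) (of_real x)) \<le> B"
  proof
    fix x assume x: "x \<in> {al (j+1)..be (j+1)}"
    have "\<forall>y\<in>{al (j+2)..be (j+2)}. \<delta>0 \<le> cmod (of_real x - of_real y)"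
      using d0(2) x by (simp add: numeral_2_eq_2)
    then show "cmod (nik_up mu ep (j+2) (k - (j+2)) (of_real x)) \<le> B" using B by blast
  qed
  then show ?thesis unfolding e good_def using nb(1) by blast
qed

lemma Acal_rep:
  assumes "j + 1 \<le> m"
  shows "Acal mu ep v t m a (j+1) (of_real x) = (\<Sum>k=j+1..m. (-1)^k * poly (a k) (of_real x) * Sf mu ep j k x)"
proof -
  have "(\<Sum>k=j+1..m. (-1)^k * poly (a k) (of_real x) * Sf mu ep j k x) =
      (-1)^(j+1) * poly (a (j+1)) (of_real x) * Sf mu ep j (j+1) x +
      (\<Sum>k=Suc (j+1)..m. (-1)^k * poly (a k) (of_real x) * Sf mu ep j k x)"
    using assms by (rule sum.atLeast_Suc_atMost)
  also have "(\<Sum>k=Suc (j+1)..m. (-1)^k * poly (a k) (of_real x) * Sf mu ep j k x) =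
      (\<Sum>k=j+1+1..m. (-1)^k * poly (a k) (of_real x) * hat_s mu ep (j+1+1) k (of_real x))"
    by (intro sum.cong refl) (auto simp: Sf_def numeral_2_eq_2)
  finally show ?thesis by (simp add: Acal_def Sf_def)
qed

lemma Acal_good:
  assumes "j + 1 \<le> m"
  shows "good (al (j+1)) (be (j+1)) (\<lambda>x. Acal mu ep v t m a (j+1) (of_real x))"
proof -
  have "good (al (j+1)) (be (j+1)) (\<lambda>x. \<Sum>k=j+1..m. (-1)^k * poly (a k) (of_real x) * Sf mu ep j k x)"
    by (intro good_sum good_mult good_const good_poly Sf_good) auto
  then show ?thesis using Acal_rep[OF assms] by simp
qed

end


lemma out_R0:
  assumes "\<bar>a\<bar> + \<bar>b\<bar> + 1 \<le> cmod z"
  shows "z \<notin> (of_real ` {a..b} :: complex set)"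
proof
  assume "z \<in> of_real ` {a..b}" then obtain x where "x\<in>{a..b}" "z = of_real x" by auto
  then show False using assms by auto
qed

context setting begin

lemma R1:
  assumes j: "j \<in> {1..m-1}" and O: "Acal mu ep v t m a j \<in> O[at_infinity](\<lambda>z. 1 / z)"
  shows "\<forall>z. z \<notin> of_real ` {al (j+1)..be (j+1)} \<longrightarrow> Acal mu ep v t m a j z =
     of_real (ep (j+1)) * (LINT x|mu (j+1). Acal mu ep v t m a (j+1) (of_real x) / (z - of_real x))"
proof -
  have j1: "j+1 \<in> {1..m}" and jm: "j + 1 \<le> m" and j0: "j \<noteq> 0" using j by auto
  interpret cm "mu (j+1)" "al (j+1)" "be (j+1)" by (rule cmj[OF j1])
  define e where "e = (of_real (ep (j+1)) :: complex)"
  define A1 where "A1 = (\<lambda>x. Acal mu ep v t m a (j+1) (of_real x))"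
  define L where "L = (\<lambda>z. LINT x|mu (j+1). A1 x / (z - of_real x))"
  have gA: "good (al (j+1)) (be (j+1)) A1" unfolding A1_def by (rule Acal_good[OF jm])
  have sg: "\<And>k. k \<in> {j+1..m} \<Longrightarrow> good (al (j+1)) (be (j+1)) (Sf mu ep j k)"
    using Sf_good by auto
  obtain H where H: "\<forall>z. z \<notin> of_real ` {al (j+1)..be (j+1)} \<longrightarrow>
     (\<Sum>k\<in>{j+1..m}. (-1)^k * e * poly (a k) z * (LINT x|mu (j+1). Sf mu ep j k x / (z - of_real x))) =
     (LINT x|mu (j+1). (\<Sum>k\<in>{j+1..m}. (-1)^k * e * poly (a k) (of_real x) * Sf mu ep j k x) / (z - of_real x)) + poly H z"
    using split[where I="{j+1..m}" and S="Sf mu ep j" and c="\<lambda>k. (-1)^k * e" and p=a, OF finite_atLeastAtMost sg]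
    by blast
  have sumeq: "(\<Sum>k\<in>{j+1..m}. (-1)^k * e * poly (a k) (of_real x) * Sf mu ep j k x) = e * A1 x" for x
    unfolding A1_def Acal_rep[OF jm] by (simp add: sum_distrib_left mult_ac)
  have key: "Acal mu ep v t m a j z = (-1)^j * poly (a j) z + e * L z + poly H z"
    if z: "z \<notin> of_real ` {al (j+1)..be (j+1)}" for z
  proof -
    have "Acal mu ep v t m a j z = (-1)^j * poly (a j) z + (\<Sum>k=j+1..m. (-1)^k * poly (a k) z * hat_s mu ep (j+1) k z)"
      using j0 by (simp add: Acal_def)
    also have "(\<Sum>k=j+1..m. (-1)^k * poly (a k) z * hat_s mu ep (j+1) k z) =
        (\<Sum>k\<in>{j+1..m}. (-1)^k * e * poly (a k) z * (LINT x|mu (j+1). Sf mu ep j k x / (z - of_real x)))"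
    proof (intro sum.cong refl)
      fix k assume "k \<in> {j+1..m}"
      then have "j + 1 \<le> k" by simp
      then show "(-1)^k * poly (a k) z * hat_s mu ep (j+1) k z =
          (-1)^k * e * poly (a k) z * (LINT x|mu (j+1). Sf mu ep j k x / (z - of_real x))"
        using hat_rep[of j k mu ep z] by (simp add: e_def mult_ac)
    qed
    also have "\<dots> = (LINT x|mu (j+1). e * A1 x / (z - of_real x)) + poly H z"
      using H z sumeq by simp
    also have "(LINT x|mu (j+1). e * A1 x / (z - of_real x)) = e * L z"
      unfolding L_def by (simp add: integral_mult_right_zero[symmetric])
    finally show ?thesis by simp
  qed
  define P where "P = smult ((-1)^j) (a j) + H"
  have "decay (\<lambda>z. Acal mu ep v t m a j z - e * L z) 1"
  proof (rule decay_diff)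
    show "decay (Acal mu ep v t m a j) 1" using O by (intro decay_bigo) simp
    show "decay (\<lambda>z. e * L z) 1" unfolding L_def by (intro decay_cmult ct_decay gA)
  qed
  then have "decay (poly P) 1"
  proof (rule decay_cong[where R="\<bar>al (j+1)\<bar> + \<bar>be (j+1)\<bar> + 1"], intro allI impI)
    fix z :: complex assume "\<bar>al (j+1)\<bar> + \<bar>be (j+1)\<bar> + 1 \<le> cmod z"
    then have "z \<notin> of_real ` {al (j+1)..be (j+1)}" by (rule out_R0)
    then show "poly P z = Acal mu ep v t m a j z - e * L z" using key by (simp add: P_def)
  qed
  then have P0: "P = 0" by (rule decay_poly_zero)
  show ?thesis
  proof (intro allI impI)
    fix z :: complex assume z: "z \<notin> of_real ` {al (j+1)..be (j+1)}"
    have "poly P z = 0" using P0 by simp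
    then have "Acal mu ep v t m a j z = e * L z" using key[OF z] by (simp add: P_def)
    then show "Acal mu ep v t m a j z = of_real (ep (j+1)) * (LINT x|mu (j+1). Acal mu ep v t m a (j+1) (of_real x) / (z - of_real x))"
      by (simp add: e_def L_def A1_def)
  qed
qed

end


lemma TT_nz:
  assumes tk: "\<forall>k\<in>{1..m}. t k \<noteq> 0"
  shows "TT t m \<noteq> 0"
  unfolding TT_def using tk by (subst Lcm_0_iff) auto

lemma TT_dvd: "k \<in> {1..m} \<Longrightarrow> t k dvd TT t m"
  unfolding TT_def by (rule dvd_Lcm) auto

lemma mapT_nz:
  fixes p :: "real poly"
  shows "p \<noteq> 0 \<Longrightarrow> (map_poly of_real p :: complex poly) \<noteq> 0"
  by (subst map_poly_eq_0_iff) auto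

lemma deg_mapT: "degree (map_poly of_real p :: complex poly) = degree (p :: real poly)"
  by (rule degree_map_poly) simp

context setting begin

lemma TA0_eq:
  assumes T: "poly (map_poly of_real (TT t m)) z \<noteq> 0"
  shows "TA0 mu ep v t m a z = poly (map_poly of_real (TT t m)) z * Acal mu ep v t m a 0 z"
proof -
  define T where "T = (map_poly of_real (TT t m) :: complex poly)"
  have r: "poly T z * ratf v t k z = poly (map_poly of_real ((TT t m div t k) * v k)) z" if k: "k \<in> {1..m}" for k
  proof -
    have "TT t m = (TT t m div t k) * t k" using TT_dvd[OF k] by simp
    then have "T = map_poly of_real (TT t m div t k) * map_poly of_real (t k)"
      unfolding T_def by (metis map_of_real_mult)
    then have e: "poly T z = poly (map_poly of_real (TT t m div t k)) z * poly (map_poly of_real (t k)) z"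
      by simp
    then have "poly (map_poly of_real (t k)) z \<noteq> 0" using T unfolding T_def by auto
    then show ?thesis unfolding ratf_def e map_of_real_mult by (simp add: field_simps)
  qed
  have "poly T z * Acal mu ep v t m a 0 z =
      poly T z * (poly (a 0) z + (\<Sum>k=1..m. (-1)^k * poly (a k) z * hat_s mu ep 1 k z))
      + (\<Sum>k=1..m. (-1)^k * poly (a k) z * (poly T z * ratf v t k z))"
    by (simp add: Acal_def distrib_left sum_distrib_left sum.distrib algebra_simps)
  also have "(\<Sum>k=1..m. (-1)^k * poly (a k) z * (poly T z * ratf v t k z)) =
      (\<Sum>k=1..m. (-1)^k * poly (a k) z * poly (map_poly of_real ((TT t m div t k) * v k)) z)"
    by (intro sum.cong refl) (simp add: r)
  finally show ?thesis unfolding TA0_def T_def by simp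
qed

end


context setting begin

lemma TA0_decay:
  assumes O: "Acal mu ep v t m a 0 \<in> O[at_infinity](\<lambda>z. 1 / z ^ (n + 1))"
    and D: "degree (TT t m) \<le> n" and tk: "\<forall>k\<in>{1..m}. t k \<noteq> 0"
  shows "decay (TA0 mu ep v t m a) (Suc (n - degree (TT t m)))"
proof -
  define T where "T = (map_poly of_real (TT t m) :: complex poly)"
  define d where "d = degree (TT t m)"
  have T0: "T \<noteq> 0" unfolding T_def by (intro mapT_nz TT_nz tk)
  have dT: "degree T = d" unfolding T_def d_def by (rule deg_mapT)
  define l where "l = cmod (lead_coeff T)"
  obtain R1 where R1: "\<forall>z. R1 \<le> cmod z \<longrightarrow> l / 2 * cmod z ^ d \<le> cmod (poly T z) \<and> cmod (poly T z) \<le> 2 * l * cmod z ^ d"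
    using poly_growth[OF T0] unfolding l_def dT by blast
  have lp: "l > 0" using T0 unfolding l_def by simp
  obtain C R2 where C: "0 \<le> C" "\<forall>z. R2 \<le> cmod z \<longrightarrow> cmod (Acal mu ep v t m a 0 z) \<le> C / cmod z ^ (n + 1)"
    using decay_bigo[OF O] unfolding decay_def by blast
  have "\<forall>z. max (max R1 R2) 1 \<le> cmod z \<longrightarrow> cmod (TA0 mu ep v t m a z) \<le> (2 * l * C) / cmod z ^ Suc (n - d)"
  proof (intro allI impI)
    fix z :: complex assume z: "max (max R1 R2) 1 \<le> cmod z"
    then have zp: "0 < cmod z" by auto
    have b1: "l / 2 * cmod z ^ d \<le> cmod (poly T z)" "cmod (poly T z) \<le> 2 * l * cmod z ^ d" using R1 z by auto
    have "0 < l / 2 * cmod z ^ d" using lp zp by simp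
    then have Tz: "poly T z \<noteq> 0" using b1 by auto
    have "TA0 mu ep v t m a z = poly T z * Acal mu ep v t m a 0 z"
      unfolding T_def by (rule TA0_eq) (use Tz T_def in simp)
    then have "cmod (TA0 mu ep v t m a z) = cmod (poly T z) * cmod (Acal mu ep v t m a 0 z)"
      by (simp add: norm_mult)
    also have "\<dots> \<le> (2 * l * cmod z ^ d) * (C / cmod z ^ (n + 1))"
      using b1 C z by (intro mult_mono) auto
    also have "cmod z ^ (n + 1) = cmod z ^ d * cmod z ^ Suc (n - d)"
      using D unfolding d_def by (simp flip: power_add)
    also have "(2 * l * cmod z ^ d) * (C / (cmod z ^ d * cmod z ^ Suc (n - d))) = (2 * l * C) / cmod z ^ Suc (n - d)"
      using zp by (simp add: field_simps)
    finally show "cmod (TA0 mu ep v t m a z) \<le> (2 * l * C) / cmod z ^ Suc (n - d)" .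
  qed
  then show ?thesis unfolding decay_def d_def using lp C
    by (intro exI[of _ "2 * l * C"] exI[of _ "max (max R1 R2) 1"]) auto
qed

lemma R0T:
  assumes dec: "decay (TA0 mu ep v t m a) 1"
  shows "\<forall>z. z \<notin> of_real ` {al 1..be 1} \<longrightarrow> TA0 mu ep v t m a z = of_real (ep 1) *
     (LINT x|mu 1. Acal mu ep v t m a 1 (of_real x) * poly (map_poly of_real (TT t m)) (of_real x) / (z - of_real x))"
proof -
  have j1: "1 \<in> {1..m}" using m by auto
  interpret cm "mu 1" "al 1" "be 1" by (rule cmj[OF j1])
  define T where "T = (map_poly of_real (TT t m) :: complex poly)"
  define e where "e = (of_real (ep 1) :: complex)"
  define A1 where "A1 = (\<lambda>x. Acal mu ep v t m a 1 (of_real x))"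
  define L where "L = (\<lambda>z. LINT x|mu 1. A1 x * poly T (of_real x) / (z - of_real x))"
  have gA: "good (al 1) (be 1) (\<lambda>x. A1 x * poly T (of_real x))"
    unfolding A1_def using Acal_good[of 0 v t a] m by (intro good_mult good_poly) auto
  have sg: "\<And>k. k \<in> {1..m} \<Longrightarrow> good (al 1) (be 1) (Sf mu ep 0 k)"
    using Sf_good[of 0] by auto
  obtain H where H: "\<forall>z. z \<notin> of_real ` {al 1..be 1} \<longrightarrow>
     (\<Sum>k\<in>{1..m}. (-1)^k * e * poly (T * a k) z * (LINT x|mu 1. Sf mu ep 0 k x / (z - of_real x))) =
     (LINT x|mu 1. (\<Sum>k\<in>{1..m}. (-1)^k * e * poly (T * a k) (of_real x) * Sf mu ep 0 k x) / (z - of_real x)) + poly H z"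
    using split[where I="{1..m}" and S="Sf mu ep 0" and c="\<lambda>k. (-1)^k * e" and p="\<lambda>k. T * a k", OF finite_atLeastAtMost sg]
    by blast
  have ar: "Acal mu ep v t m a 1 (of_real x) = (\<Sum>k=1..m. (-1)^k * poly (a k) (of_real x) * Sf mu ep 0 k x)" for x
    using Acal_rep[of 0 v t a x] m by simp
  have sumeq: "(\<Sum>k\<in>{1..m}. (-1)^k * e * poly (T * a k) (of_real x) * Sf mu ep 0 k x) = e * (A1 x * poly T (of_real x))" for x
    unfolding A1_def ar by (simp add: sum_distrib_left sum_distrib_right mult_ac)
  have hr: "hat_s mu ep 1 k z = e * (LINT x|mu 1. Sf mu ep 0 k x / (z - of_real x))" if "1 \<le> k" for k z
    using hat_rep[of 0 k mu ep z] that by (simp add: e_def)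
  define G where "G = (\<Sum>k=1..m. smult ((-1)^k) (a k * map_poly of_real ((TT t m div t k) * v k)))"
  have key: "TA0 mu ep v t m a z = poly (T * a 0) z + poly G z + e * L z + poly H z"
    if z: "z \<notin> of_real ` {al 1..be 1}" for z
  proof -
    have "TA0 mu ep v t m a z = poly T z * poly (a 0) z
        + (\<Sum>k=1..m. poly T z * ((-1)^k * poly (a k) z * hat_s mu ep 1 k z)) + poly G z"
      unfolding TA0_def T_def G_def by (simp add: distrib_left sum_distrib_left poly_sum mult_ac)
    also have "(\<Sum>k=1..m. poly T z * ((-1)^k * poly (a k) z * hat_s mu ep 1 k z)) =
        (\<Sum>k\<in>{1..m}. (-1)^k * e * poly (T * a k) z * (LINT x|mu 1. Sf mu ep 0 k x / (z - of_real x)))"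
    proof (intro sum.cong refl)
      fix k assume "k \<in> {1..m}"
      then have "1 \<le> k" by simp
      then show "poly T z * ((-1)^k * poly (a k) z * hat_s mu ep 1 k z) =
          (-1)^k * e * poly (T * a k) z * (LINT x|mu 1. Sf mu ep 0 k x / (z - of_real x))"
        using hr[of k z] by (simp add: mult_ac)
    qed
    also have "\<dots> = (LINT x|mu 1. e * (A1 x * poly T (of_real x)) / (z - of_real x)) + poly H z"
      using H z sumeq by simp
    also have "(LINT x|mu 1. e * (A1 x * poly T (of_real x)) / (z - of_real x)) = e * L z"
      unfolding L_def by (simp add: integral_mult_right_zero[symmetric])
    finally show ?thesis by simp
  qed
  define P where "P = T * a 0 + G + H"
  have "decay (\<lambda>z. TA0 mu ep v t m a z - e * L z) 1"
  proof -
    have dL: "decay L 1" unfolding L_def by (rule ct_decay[OF gA])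
    show ?thesis by (intro decay_diff dec decay_cmult dL)
  qed
  then have "decay (poly P) 1"
  proof (rule decay_cong[where R="\<bar>al 1\<bar> + \<bar>be 1\<bar> + 1"], intro allI impI)
    fix z :: complex assume "\<bar>al 1\<bar> + \<bar>be 1\<bar> + 1 \<le> cmod z"
    then have "z \<notin> of_real ` {al 1..be 1}" by (rule out_R0)
    then show "poly P z = TA0 mu ep v t m a z - e * L z" using key by (simp add: P_def)
  qed
  then have P0: "P = 0" by (rule decay_poly_zero)
  show ?thesis
  proof (intro allI impI)
    fix z :: complex assume z: "z \<notin> of_real ` {al 1..be 1}"
    have "poly P z = 0" using P0 by simp
    then have "TA0 mu ep v t m a z = e * L z" using key[OF z] by (simp add: P_def add_ac)
    then show "TA0 mu ep v t m a z = of_real (ep 1) *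
     (LINT x|mu 1. Acal mu ep v t m a 1 (of_real x) * poly (map_poly of_real (TT t m)) (of_real x) / (z - of_real x))"
      by (simp add: e_def L_def A1_def T_def)
  qed
qed

end


context setting begin

lemma QS:
  fixes K :: nat
  assumes j: "j \<in> {1..m-1}" and O: "Acal mu ep v t m a j \<in> O[at_infinity](\<lambda>z. 1 / z)"
    and Zsub: "{z. z \<notin> of_real ` {al (j+1)..be (j+1)} \<and> Acal mu ep v t m a j z = 0} \<subseteq> of_real ` {al j..be j}"
    and Zcard: "card {z. z \<notin> of_real ` {al (j+1)..be (j+1)} \<and> Acal mu ep v t m a j z = 0} = K"
    and K: "K \<ge> 1"
  shows "(\<forall>z. z \<notin> of_real ` {al (j+1)..be (j+1)} \<longrightarrow>
        Acal mu ep v t m a j z =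
          poly (Qpoly (Acal mu ep v t m a) al be j) z *
          (of_real (ep (j+1)) * (LINT x|mu (j+1).
              Acal mu ep v t m a (j+1) (of_real x) / (z - of_real x)
              / poly (Qpoly (Acal mu ep v t m a) al be j) (of_real x)))) \<and>
     (\<forall>\<nu><K.
        of_real (ep (j+1)) * (LINT x|mu (j+1).
           of_real x ^ \<nu> * Acal mu ep v t m a (j+1) (of_real x)
           / poly (Qpoly (Acal mu ep v t m a) al be j) (of_real x)) = 0)"
proof -
  define A where "A = Acal mu ep v t m a"
  define Q where "Q = Qpoly (Acal mu ep v t m a) al be j"
  define S where "S = {x::real. x \<in> {al j..be j} \<and> A j (of_real x) = 0}"
  define Z where "Z = {z. z \<notin> of_real ` {al (j+1)..be (j+1)} \<and> A j z = 0}"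
  have j1: "j+1 \<in> {1..m}" and jm: "j + 1 \<le> m" using j by auto
  have dj: "{al j..be j} \<inter> {al (j+1)..be (j+1)} = {}" using disj j by auto
  have ZS: "Z = of_real ` S"
  proof
    show "Z \<subseteq> of_real ` S"
    proof
      fix z :: complex assume z: "z \<in> Z"
      then obtain x where x: "x \<in> {al j..be j}" "z = of_real x" using Zsub unfolding Z_def A_def by blast
      then show "z \<in> of_real ` S" using z unfolding Z_def S_def by auto
    qed
    show "of_real ` S \<subseteq> Z"
    proof
      fix z :: complex assume "z \<in> of_real ` S"
      then obtain x where x: "x \<in> {al j..be j}" "A j (of_real x) = 0" "z = of_real x" unfolding S_def by auto
      have "x \<notin> {al (j+1)..be (j+1)}" using dj x(1) by blast
      then have "z \<notin> of_real ` {al (j+1)..be (j+1)}" using x(3) by auto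
      then show "z \<in> Z" using x unfolding Z_def by auto
    qed
  qed
  have inj: "inj_on (of_real :: real \<Rightarrow> complex) S" by (auto intro: inj_onI)
  have cZ: "card Z = K" using Zcard unfolding Z_def A_def .
  then have finZ: "finite Z" using K by (metis card.infinite not_one_le_zero)
  have cS: "card S = K" using cZ ZS card_image[OF inj] by simp
  have finS: "finite S" using finZ ZS finite_imageD[OF _ inj] by simp
  have Qd: "Q = (\<Prod>x\<in>S. [:- of_real x, 1:])" unfolding Q_def Qpoly_def S_def A_def ..
  have polyQ: "poly Q z = (\<Prod>x\<in>S. z - of_real x)" for z unfolding Qd by (simp add: poly_prod)
  have Qz: "poly Q z = 0 \<longleftrightarrow> z \<in> of_real ` S" for z unfolding polyQ using finS by auto
  have Q0: "Q \<noteq> 0" unfolding Qd using finS by (auto simp: prod_zero_iff)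
  have dQ: "degree Q = K"
  proof -
    have "degree Q = (\<Sum>x\<in>S. degree ([:- of_real x, 1:] :: complex poly))"
      unfolding Qd by (rule degree_prod_eq_sum_degree) auto
    also have "\<dots> = card S" by simp
    finally show ?thesis using cS by simp
  qed
  have Qnz: "\<forall>x\<in>{al (j+1)..be (j+1)}. poly Q (of_real x) \<noteq> 0"
  proof
    fix x assume x: "x \<in> {al (j+1)..be (j+1)}"
    have "of_real x \<notin> (of_real ` S :: complex set)"
    proof
      assume "(of_real x :: complex) \<in> of_real ` S"
      then obtain y where "y \<in> S" "(of_real x :: complex) = of_real y" by auto
      then have "x \<in> {al j..be j}" unfolding S_def by auto
      then show False using x dj by blast
    qed
    then show "poly Q (of_real x) \<noteq> 0" using Qz by simp
  qed
  interpret cm "mu (j+1)" "al (j+1)" "be (j+1)" by (rule cmj[OF j1])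
  define e where "e = (of_real (ep (j+1)) :: complex)"
  have e0: "e \<noteq> 0" and ne: "cmod e = 1" using ep_norm[OF j1] unfolding e_def by auto
  define A1 where "A1 = (\<lambda>x. A (j+1) (of_real x))"
  define w where "w = (\<lambda>x. A1 x / poly Q (of_real x))"
  have gA: "good (al (j+1)) (be (j+1)) A1" unfolding A1_def A_def by (rule Acal_good[OF jm])
  have gw: "good (al (j+1)) (be (j+1)) w"
  proof -
    have "good (al (j+1)) (be (j+1)) (\<lambda>x. A1 x * (1 / poly Q (of_real x)))"
      by (intro good_mult gA good_inv_poly Qnz)
    then show ?thesis unfolding w_def by simp
  qed
  define L where "L = (\<lambda>z. LINT x|mu (j+1). w x / (z - of_real x))"
  obtain H where H: "H = 0 \<or> degree H < degree Q"
    "\<forall>z. z \<notin> of_real ` {al (j+1)..be (j+1)} \<longrightarrow>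
       (LINT x|mu (j+1). w x * (poly Q z - poly Q (of_real x)) / (z - of_real x)) = poly H z"
    using poly_ct[OF gw, of Q] by blast
  have r1: "\<forall>z. z \<notin> of_real ` {al (j+1)..be (j+1)} \<longrightarrow> A j z = e * (LINT x|mu (j+1). A1 x / (z - of_real x))"
    using R1[OF j O] unfolding A_def A1_def e_def .
  have key: "A j z = e * (poly Q z * L z - poly H z)" if z: "z \<notin> of_real ` {al (j+1)..be (j+1)}" for z
  proof -
    have i1: "integrable (mu (j+1)) (\<lambda>x. poly Q (of_real x) * w x / (z - of_real x))"
      by (rule ct_int[OF good_mult[OF good_poly gw] z])
    have c1: "(LINT x|mu (j+1). A1 x / (z - of_real x)) = (LINT x|mu (j+1). poly Q (of_real x) * w x / (z - of_real x))"
    proof (rule integral_cong_AE)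
      show "(\<lambda>x. A1 x / (z - of_real x)) \<in> borel_measurable (mu (j+1))"
        by (rule borel_measurable_integrable[OF ct_int[OF gA z]])
      show "(\<lambda>x. poly Q (of_real x) * w x / (z - of_real x)) \<in> borel_measurable (mu (j+1))"
        by (rule borel_measurable_integrable[OF i1])
      show "AE x in mu (j+1). A1 x / (z - of_real x) = poly Q (of_real x) * w x / (z - of_real x)"
        using ae
      proof eventually_elim
        case (elim x) then show ?case using Qnz by (simp add: w_def)
      qed
    qed
    have c2: "poly Q z * L z - (LINT x|mu (j+1). poly Q (of_real x) * w x / (z - of_real x)) = poly H z"
    proof -
      have fe: "(\<lambda>x. poly Q z * (w x / (z - of_real x)) - poly Q (of_real x) * w x / (z - of_real x)) =
          (\<lambda>x. w x * (poly Q z - poly Q (of_real x)) / (z - of_real x))"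
        by (rule ext) (simp add: diff_divide_distrib algebra_simps)
      have e1: "poly Q z * L z = (LINT x|mu (j+1). poly Q z * (w x / (z - of_real x)))"
        unfolding L_def by (rule integral_mult_right_zero[symmetric])
      have i2: "integrable (mu (j+1)) (\<lambda>x. poly Q z * (w x / (z - of_real x)))"
        by (intro Bochner_Integration.integrable_mult_right ct_int gw z)
      have "poly Q z * L z - (LINT x|mu (j+1). poly Q (of_real x) * w x / (z - of_real x)) =
          (LINT x|mu (j+1). poly Q z * (w x / (z - of_real x)) - poly Q (of_real x) * w x / (z - of_real x))"
        by (subst e1) (rule Bochner_Integration.integral_diff[symmetric, OF i2 i1])
      also have "\<dots> = (LINT x|mu (j+1). w x * (poly Q z - poly Q (of_real x)) / (z - of_real x))"
        by (simp only: fe)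
      also have "\<dots> = poly H z" using H(2) z by simp
      finally show ?thesis .
    qed
    have "(LINT x|mu (j+1). A1 x / (z - of_real x)) = poly Q z * L z -
        (poly Q z * L z - (LINT x|mu (j+1). poly Q (of_real x) * w x / (z - of_real x)))"
      using c1 by simp
    then have "(LINT x|mu (j+1). A1 x / (z - of_real x)) = poly Q z * L z - poly H z"
      by (simp only: c2)
    then show ?thesis using r1 z by simp
  qed
  have H0: "H = 0"
  proof (rule ccontr)
    assume Hn: "H \<noteq> 0"
    have "of_real ` S \<subseteq> {z. poly H z = 0}"
    proof
      fix z :: complex assume zS: "z \<in> of_real ` S"
      then obtain x where x: "x \<in> S" "z = of_real x" by auto
      have "z \<in> Z" using zS ZS by simp
      then have zn: "z \<notin> of_real ` {al (j+1)..be (j+1)}" and Az: "A j z = 0" unfolding Z_def by auto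
      have "poly Q z = 0" using Qz zS by simp
      then have "e * poly H z = 0" using key[OF zn] Az by simp
      then show "z \<in> {z. poly H z = 0}" using e0 by simp
    qed
    then have "card (of_real ` S :: complex set) \<le> card {z. poly H z = 0}"
      by (rule card_mono[OF poly_roots_finite[OF Hn]])
    also have "\<dots> \<le> degree H" by (rule card_poly_roots_bound[OF Hn])
    finally have "K \<le> degree H" using cS card_image[OF inj] by simp
    then show False using H(1) Hn dQ by simp
  qed
  have part1: "A j z = poly Q z * (e * L z)" if "z \<notin> of_real ` {al (j+1)..be (j+1)}" for z
    using key[OF that] H0 by simp
  have iq: "(\<lambda>x. A (j+1) (of_real x) / (z - of_real x) / poly Q (of_real x)) = (\<lambda>x. w x / (z - of_real x))" for z
    by (rule ext) (simp add: w_def A1_def mult.commute)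
  obtain R1 where R1: "\<forall>z. R1 \<le> cmod z \<longrightarrow> cmod (lead_coeff Q) / 2 * cmod z ^ K \<le> cmod (poly Q z)"
    using poly_growth[OF Q0] unfolding dQ by blast
  define l where "l = cmod (lead_coeff Q)"
  have lp: "l > 0" using Q0 unfolding l_def by simp
  obtain C R2 where C: "0 \<le> C" "\<forall>z. R2 \<le> cmod z \<longrightarrow> cmod (A j z) \<le> C / cmod z ^ 1"
    using decay_bigo[of "A j" 1] O unfolding decay_def A_def by auto
  define R0 where "R0 = \<bar>al (j+1)\<bar> + \<bar>be (j+1)\<bar> + 1"
  have "\<forall>z. max (max R1 R2) (max R0 1) \<le> cmod z \<longrightarrow> cmod (L z) \<le> (2 * C / l) / cmod z ^ Suc K"
  proof (intro allI impI)
    fix z :: complex assume z: "max (max R1 R2) (max R0 1) \<le> cmod z"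
    then have zp: "0 < cmod z" by auto
    have zo: "z \<notin> of_real ` {al (j+1)..be (j+1)}" using z unfolding R0_def by (intro out_R0) auto
    have bQ: "l / 2 * cmod z ^ K \<le> cmod (poly Q z)" using R1 z unfolding l_def by auto
    have pos: "0 < l / 2 * cmod z ^ K" using lp zp by simp
    have bA: "cmod (A j z) \<le> C / cmod z" using C z by auto
    have "cmod (A j z) = cmod (poly Q z) * cmod (L z)" using part1[OF zo] ne by (simp add: norm_mult)
    moreover have Qp: "poly Q z \<noteq> 0" using pos bQ by auto
    ultimately have "cmod (L z) = cmod (A j z) / cmod (poly Q z)" by (simp add: field_simps)
    also have "\<dots> \<le> (C / cmod z) / (l / 2 * cmod z ^ K)"
      using bA bQ pos C by (intro frac_le) auto
    also have "\<dots> = (2 * C / l) / cmod z ^ Suc K" using zp lp by (simp add: field_simps)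
    finally show "cmod (L z) \<le> (2 * C / l) / cmod z ^ Suc K" .
  qed
  then have dL: "decay L (Suc K)" unfolding decay_def using C lp
    by (intro exI[of _ "2 * C / l"] exI[of _ "max (max R1 R2) (max R0 1)"]) auto
  have mom: "\<forall>\<nu><K. (LINT x|mu (j+1). of_real x ^ \<nu> * w x) = 0"
    by (rule moment[OF gw]) (use dL L_def in simp)
  show ?thesis
  proof (intro conjI allI impI)
    fix z :: complex assume z: "z \<notin> of_real ` {al (j+1)..be (j+1)}"
    show "Acal mu ep v t m a j z = poly (Qpoly (Acal mu ep v t m a) al be j) z *
          (of_real (ep (j+1)) * (LINT x|mu (j+1). Acal mu ep v t m a (j+1) (of_real x) / (z - of_real x)
              / poly (Qpoly (Acal mu ep v t m a) al be j) (of_real x)))"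
      using part1[OF z] iq[of z] unfolding A_def Q_def e_def L_def by simp
  next
    fix \<nu> :: nat assume "\<nu> < K"
    then have "(LINT x|mu (j+1). of_real x ^ \<nu> * w x) = 0" using mom by simp
    then show "of_real (ep (j+1)) * (LINT x|mu (j+1). of_real x ^ \<nu> * Acal mu ep v t m a (j+1) (of_real x)
           / poly (Qpoly (Acal mu ep v t m a) al be j) (of_real x)) = 0"
      unfolding w_def A1_def A_def Q_def by simp
  qed
qed

end

theorem lemma2p1:
  fixes m n N :: nat
    and mu :: "nat \<Rightarrow> real measure" and ep :: "nat \<Rightarrow> real"
    and al be :: "nat \<Rightarrow> real"
    and v t :: "nat \<Rightarrow> real poly"
    and a :: "nat \<Rightarrow> complex poly"
  assumes m: "m \<ge> 1"
    (* Delta_j = {al j..be j}, consecutive ones disjoint *)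
    and intv: "\<forall>j\<in>{1..m}. al j \<le> be j"
    and disj: "\<forall>j\<in>{1..m-1}. {al j..be j} \<inter> {al (j+1)..be (j+1)} = {}"
    (* sigma_j = ep j * mu j: finite Borel measure of constant sign, infinite support, hull Delta_j *)
    and meas: "\<forall>j\<in>{1..m}. sets (mu j) = sets borel \<and> finite_measure (mu j)"
    and sgn: "\<forall>j\<in>{1..m}. ep j = 1 \<or> ep j = -1"
    and supp: "\<forall>j\<in>{1..m}. infinite (msupp (mu j)) \<and> convex hull (msupp (mu j)) = {al j..be j}"
    (* r_k = v_k / t_k *)
    and rat: "\<forall>k\<in>{1..m}. lead_coeff (t k) = 1 \<and> degree (v k) < degree (t k) \<and> coprime (v k) (t k)"
    (* zeros of T avoid Delta_1 and Delta_m *)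
    and Tzeros: "\<forall>z::complex. poly (map_poly of_real (TT t m)) z = 0 \<longrightarrow>
                   z \<notin> of_real ` ({al 1..be 1} \<union> {al m..be m})"
    (* f has exactly D poles (with multiplicity) in C \ Delta_m *)
    and fpoles: "finite {z. z \<notin> of_real ` {al m..be m} \<and> is_pole (fF mu ep v t m) z} \<and>
                 (\<Sum>z\<in>{z. z \<notin> of_real ` {al m..be m} \<and> is_pole (fF mu ep v t m) z}.
                     nat (- zorder (fF mu ep v t m) z)) = degree (TT t m)"
    and nN: "n > N" and ND: "N \<ge> degree (TT t m)"
    (* the known facts valid for n > N *)
    and HP: "is_HP mu ep v t m n a"
    and monic: "degree (a m) = n \<and> lead_coeff (a m) = 1"
    and uniq: "\<forall>b. is_HP mu ep v t m n b \<longrightarrow> (\<exists>c. \<forall>j\<le>m. b j = smult c (a j))"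
    and zeros_m: "card {x\<in>{al m..be m}. poly (a m) (of_real x) = 0} = n - degree (TT t m) \<and>
                  (\<forall>x\<in>{al m..be m}. poly (a m) (of_real x) = 0 \<longrightarrow> order (of_real x) (a m) = 1)"
    and zeros_j: "\<forall>j\<in>{1..m-1}.
         (let Z = {z. z \<notin> of_real ` {al (j+1)..be (j+1)} \<and> Acal mu ep v t m a j z = 0} in
            Z \<subseteq> of_real ` {al j..be j} \<and> card Z = n - degree (TT t m) \<and>
            (\<forall>z\<in>Z. deriv (Acal mu ep v t m a j) z \<noteq> 0))"
  shows
    "(\<forall>j\<in>{1..m-1}. \<forall>z. z \<notin> of_real ` {al (j+1)..be (j+1)} \<longrightarrow>
        Acal mu ep v t m a j z =
          poly (Qpoly (Acal mu ep v t m a) al be j) z *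
          (of_real (ep (j+1)) * (LINT x|mu (j+1).
              Acal mu ep v t m a (j+1) (of_real x) / (z - of_real x)
              / poly (Qpoly (Acal mu ep v t m a) al be j) (of_real x)))) \<and>
     (\<forall>z. z \<notin> of_real ` {al 1..be 1} \<longrightarrow>
        TA0 mu ep v t m a z =
          of_real (ep 1) * (LINT x|mu 1.
              Acal mu ep v t m a 1 (of_real x) * poly (map_poly of_real (TT t m)) (of_real x)
              / (z - of_real x))) \<and>
     (\<forall>j\<in>{1..m-1}. \<forall>\<nu><n - degree (TT t m).
        of_real (ep (j+1)) * (LINT x|mu (j+1).
           of_real x ^ \<nu> * Acal mu ep v t m a (j+1) (of_real x)
           / poly (Qpoly (Acal mu ep v t m a) al be j) (of_real x)) = 0) \<and>
     (\<forall>\<nu><n - degree (TT t m).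
        of_real (ep 1) * (LINT x|mu 1.
           of_real x ^ \<nu> * Acal mu ep v t m a 1 (of_real x)
           * poly (map_poly of_real (TT t m)) (of_real x)) = 0)"
proof -
  interpret setting m mu ep al be
    using m intv disj meas sgn supp by (intro setting.intro)
  have tk: "\<forall>k\<in>{1..m}. t k \<noteq> 0"
  proof
    fix k assume "k \<in> {1..m}"
    then have "lead_coeff (t k) = 1" using rat by blast
    then show "t k \<noteq> 0" by auto
  qed
  have O0: "Acal mu ep v t m a 0 \<in> O[at_infinity](\<lambda>z. 1 / z ^ (n + 1))"
    and Oj: "\<forall>j\<in>{1..m-1}. Acal mu ep v t m a j \<in> O[at_infinity](\<lambda>z. 1 / z)"
    using HP unfolding is_HP_def by auto
  have DN: "degree (TT t m) \<le> n" using nN ND by simp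
  have K1: "n - degree (TT t m) \<ge> 1" using nN ND by simp
  have dec: "decay (TA0 mu ep v t m a) (Suc (n - degree (TT t m)))"
    by (rule TA0_decay[OF O0 DN tk])
  have part2: "\<forall>z. z \<notin> of_real ` {al 1..be 1} \<longrightarrow> TA0 mu ep v t m a z = of_real (ep 1) *
     (LINT x|mu 1. Acal mu ep v t m a 1 (of_real x) * poly (map_poly of_real (TT t m)) (of_real x) / (z - of_real x))"
    by (rule R0T[OF decay_mono[OF dec]]) simp
  have QSj: "(\<forall>z. z \<notin> of_real ` {al (j+1)..be (j+1)} \<longrightarrow>
        Acal mu ep v t m a j z =
          poly (Qpoly (Acal mu ep v t m a) al be j) z *
          (of_real (ep (j+1)) * (LINT x|mu (j+1).
              Acal mu ep v t m a (j+1) (of_real x) / (z - of_real x)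
              / poly (Qpoly (Acal mu ep v t m a) al be j) (of_real x)))) \<and>
     (\<forall>\<nu><n - degree (TT t m).
        of_real (ep (j+1)) * (LINT x|mu (j+1).
           of_real x ^ \<nu> * Acal mu ep v t m a (j+1) (of_real x)
           / poly (Qpoly (Acal mu ep v t m a) al be j) (of_real x)) = 0)"
    if j: "j \<in> {1..m-1}" for j
  proof (rule QS[OF j])
    show "Acal mu ep v t m a j \<in> O[at_infinity](\<lambda>z. 1 / z)" using Oj j by blast
    show "{z. z \<notin> of_real ` {al (j+1)..be (j+1)} \<and> Acal mu ep v t m a j z = 0} \<subseteq> of_real ` {al j..be j}"
      using zeros_j j unfolding Let_def by blast
    show "card {z. z \<notin> of_real ` {al (j+1)..be (j+1)} \<and> Acal mu ep v t m a j z = 0} = n - degree (TT t m)"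
      using zeros_j j unfolding Let_def by blast
    show "1 \<le> n - degree (TT t m)" by (rule K1)
  qed
  have part4: "\<forall>\<nu><n - degree (TT t m).
        of_real (ep 1) * (LINT x|mu 1.
           of_real x ^ \<nu> * Acal mu ep v t m a 1 (of_real x)
           * poly (map_poly of_real (TT t m)) (of_real x)) = 0"
  proof -
    have j1: "1 \<in> {1..m}" using m by auto
    interpret c1: cm "mu 1" "al 1" "be 1" by (rule cmj[OF j1])
    define w where "w = (\<lambda>x. Acal mu ep v t m a 1 (of_real x) * poly (map_poly of_real (TT t m)) (of_real x))"
    have gw: "good (al 1) (be 1) w"
      unfolding w_def using Acal_good[of 0 v t a] m by (intro good_mult good_poly) auto
    have e2: "of_real (ep 1) * (of_real (ep 1) :: complex) = 1"
      using ep_sq[OF j1] by (metis of_real_1 of_real_mult)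
    have "decay (\<lambda>z. of_real (ep 1) * TA0 mu ep v t m a z) (Suc (n - degree (TT t m)))"
      by (rule decay_cmult[OF dec])
    then have "decay (\<lambda>z. LINT x|mu 1. w x / (z - of_real x)) (Suc (n - degree (TT t m)))"
    proof (rule decay_cong[where R="\<bar>al 1\<bar> + \<bar>be 1\<bar> + 1"], intro allI impI)
      fix z :: complex assume "\<bar>al 1\<bar> + \<bar>be 1\<bar> + 1 \<le> cmod z"
      then have "z \<notin> of_real ` {al 1..be 1}" by (rule out_R0)
      then have "TA0 mu ep v t m a z = of_real (ep 1) * (LINT x|mu 1. w x / (z - of_real x))"
        using part2 unfolding w_def by simp
      then show "(LINT x|mu 1. w x / (z - of_real x)) = of_real (ep 1) * TA0 mu ep v t m a z"
        using e2 by (simp add: mult.assoc[symmetric])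
    qed
    then have "\<forall>\<nu><n - degree (TT t m). (LINT x|mu 1. of_real x ^ \<nu> * w x) = 0"
      by (rule c1.moment[OF gw])
    then show ?thesis unfolding w_def by (simp add: mult.assoc)
  qed
  show ?thesis
    using QSj part2 part4 by blast
qed

end
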